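(* Let $\Gamma\subset SL(2,\mathbb Z)$ be a congruence subgroup, $(\lambda_0,\mu_0)$ a partition pair, and $(\lambda_1,\mu_1)$ the largest partition pair with $(\lambda_1,\mu_1)<(\lambda_0,\mu_0)$ and $|\lambda_1|+|\mu_1|=|\lambda_0|+|\mu_0|$ (assumed to exist). Then the map $\sum_{(\lambda,\mu)\le(\lambda_0,\mu_0)}a_{-\lambda}b_{-\mu}f_{\lambda,\mu}\mapsto f_{\lambda_0,\mu_0}$ sends $(V_{\lambda_0,\mu_0})^\Gamma_0$ into $M_{2(p(\mu_0)-p(\lambda_0))}(\Gamma)$ with kernel $(V_{\lambda_1,\mu_1})^\Gamma_0$; in particular \[ (V_{\lambda_0,\mu_0})^\Gamma_0/(V_{\lambda_1,\mu_1})^\Gamma_0\subset M_{2(p(\mu_0)-p(\lambda_0))}(\Gamma). \]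
   Context: Let $\mathbb H$ be the upper half plane and $\mathcal O(\mathbb H)$ its ring of holomorphic functions. Let $V=\mathbb C[a_{-1},a_{-2},\dots,b_0,b_{-1},\dots]$ be the vacuum module of the Heisenberg Lie algebra $[a_m,b_n]=\delta_{m,-n}C$ (with $a_m1=0$ for $m\ge0$, $b_n1=0$ for $n>0$, $C=1$), a vertex algebra with fields $a(z)=\sum a_nz^{-n-1}$, $b(z)=\sum b_nz^{-n}$. Let $\mathscr D^{ch}(\mathbb H)=V\otimes_{\mathbb C[b_0]}\mathcal O(\mathbb H)$ ($b_0\mapsto\tau$, $b=b_0$), the vertex algebra of chiral differential operators on $\mathbb H$, with $Y(f,z)=\sum_{i\ge0}\frac{f^{(i)}(b)}{i!}(\sum_{n\ne0}b_nz^{-n})^i$ for $f\in\mathcal O(\mathbb H)$. For a partition $\lambda=(\lambda_{(1)}\ge\dots\ge\lambda_{(d)}\ge1)$ set $p(\lambda)=d$, $|\lambda|=\sum\lambda_{(i)}$, $a_{-\lambda}=a_{-\lambda_{(1)}}\cdots a_{-\lambda_{(d)}}$, similarly $b_{-\mu}$ (empty partition allowed, $a_{-\emptyset}=1$, $p(\emptyset)=|\emptyset|=0$). Every element of $\mathscr D^{ch}(\mathbb H)$ is uniquely a finite sum $\sum a_{-\lambda}b_{-\mu}f_{\lambda,\mu}(b)$. $SL(2,\mathbb R)$ acts on the right by vertex algebra automorphisms $\pi(g)$, integrating the zero modes of $E=-a_{-1}$, $F=a_{-1}b_0^2+2b_{-1}$, $H=-2a_{-1}b_0$ via $\pi(e^x)=\exp(-x_{(0)})$;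 for $g=\begin{pmatrix}\alpha&\beta\\\gamma&\delta\end{pmatrix}$, $\pi(g)a_{-1}=a_{-1}(\gamma b+\delta)^2+2\gamma^2b_{-1}$ and $\pi(g)f(b)=f(\frac{\alpha b+\beta}{\gamma b+\delta})$. Order on partitions: $\lambda>\lambda'$ if either the first differing entry (at some index $j\le\min(p(\lambda),p(\lambda'))$) is larger in $\lambda$, or $p(\lambda)>p(\lambda')$ and $\lambda'$ agrees with the first $p(\lambda')$ entries of $\lambda$. Set $l(\lambda,\mu)=p(\lambda)-p(\mu)$. Order on pairs: $(\lambda,\mu)>(\lambda',\mu')$ if $l(\lambda,\mu)>l(\lambda',\mu')$; or $l(\lambda,\mu)=l(\lambda',\mu')$ and $\lambda>\lambda'$; or $\lambda=\lambda'$, $p(\mu)=p(\mu')$ and $\mu<\mu'$. $V_{\lambda,\mu}$ is the span of all $a_{-\lambda'}b_{-\mu'}f(b)$, $f\in\mathcal O(\mathbb H)$, with $(\lambda',\mu')\le(\lambda,\mu)$ and $|\lambda'|+|\mu'|=|\lambda|+|\mu|$. For a congruence subgroup $\Gamma$, $(V_{\lambda,\mu})^\Gamma_0$ is the set of $\Gamma$-invariant elements of $V_{\lambda,\mu}$ holomorphic at all cusps, where a $\Gamma$-invariant $v$ is holomorphic at the cusp $c$ if, for $\rho\in SL(2,\mathbb Z)$ with $\rho(c)=\infty$ and $\pi(\rho)v=\sum a_{-\lambda}b_{-\mu}\tilde f_{\lambda,\mu}$ (each $\tilde f_{\lambda,\mu}$ being $N$-periodic for some integer $N>0$), the Fourier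 expansions $\tilde f_{\lambda,\mu}=\sum_m\tilde u(m)e^{2\pi im\tau/N}$ have $\tilde u(m)=0$ for $m<0$. $M_k(\Gamma)$ denotes holomorphic modular forms of weight $k$ for $\Gamma$ ($M_k(\Gamma)=0$ for $k<0$). *)

theory Defs
  imports "HOL-Analysis.Analysis" "HOL-Complex_Analysis.Complex_Analysis" "HOL-Library.Multiset"
begin

type_synonym rmat = "real \<times> real \<times> real \<times> real"   (* (alpha, beta, gamma, delta) *)
type_synonym imat = "int \<times> int \<times> int \<times> int"

definition of_intm :: "imat \<Rightarrow> rmat" where
  "of_intm g = (case g of (a,b,c,d) \<Rightarrow> (real_of_int a, real_of_int b, real_of_int c, real_of_int d))"

definition SL2Z :: "imat set" where
  "SL2Z = {(a,b,c,d). a*d - b*c = 1}"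

definition mmul :: "imat \<Rightarrow> imat \<Rightarrow> imat" where
  "mmul g h = (case g of (a,b,c,d) \<Rightarrow> case h of (a',b',c',d') \<Rightarrow>
     (a*a' + b*c', a*b' + b*d', c*a' + d*c', c*b' + d*d'))"

definition minv :: "imat \<Rightarrow> imat" where
  "minv g = (case g of (a,b,c,d) \<Rightarrow> (d, -b, -c, a))"

definition principal_cong :: "int \<Rightarrow> imat set" where
  "principal_cong N = {(a,b,c,d) \<in> SL2Z. N dvd (a - 1) \<and> N dvd b \<and> N dvd c \<and> N dvd (d - 1)}"

definition congruence_subgroup :: "imat set \<Rightarrow> bool" where
  "congruence_subgroup \<Gamma> \<longleftrightarrow> \<Gamma> \<subseteq> SL2Z \<and> (1,0,0,1) \<in> \<Gamma> \<and>
     (\<forall>g\<in>\<Gamma>. \<forall>h\<in>\<Gamma>. mmul g h \<in> \<Gamma>) \<and> (\<forall>g\<in>\<Gamma>. minv g \<in> \<Gamma>) \<and>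
     (\<exists>N>0. principal_cong N \<subseteq> \<Gamma>)"

definition mob :: "rmat \<Rightarrow> complex \<Rightarrow> complex" where
  "mob g \<tau> = (case g of (a,b,c,d) \<Rightarrow>
     (complex_of_real a * \<tau> + complex_of_real b) / (complex_of_real c * \<tau> + complex_of_real d))"

definition upper :: "complex set" where "upper = {z. Im z > 0}"

definition holo_at_inf :: "(complex \<Rightarrow> complex) \<Rightarrow> bool" where
  "holo_at_inf f \<longleftrightarrow> (\<exists>N::nat. N > 0 \<and> (\<forall>\<tau>. Im \<tau> > 0 \<longrightarrow> f (\<tau> + of_nat N) = f \<tau>) \<and>
     (\<exists>u::int \<Rightarrow> complex. (\<forall>m<0. u m = 0) \<and>
        (\<forall>\<tau>. Im \<tau> > 0 \<longrightarrow>
           ((\<lambda>m. u m * exp (2 * of_real pi * \<i> * of_int m * \<tau> / of_nat N)) has_sum f \<tau>) UNIV)))"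

definition slash :: "int \<Rightarrow> imat \<Rightarrow> (complex \<Rightarrow> complex) \<Rightarrow> complex \<Rightarrow> complex" where
  "slash k g f = (\<lambda>\<tau>. case g of (a,b,c,d) \<Rightarrow>
      (of_int c * \<tau> + of_int d) powi (-k) * f (mob (of_intm g) \<tau>))"

text \<open>Holomorphic modular forms of weight k for \<Gamma>, as functions on the upper half plane
  (represented as functions on C vanishing off the upper half plane); M_k = 0 for k < 0.\<close>
definition MF :: "int \<Rightarrow> imat set \<Rightarrow> (complex \<Rightarrow> complex) set" where
  "MF k \<Gamma> = {f. (k < 0 \<longrightarrow> f = (\<lambda>_. 0)) \<and> f holomorphic_on upper \<and> (\<forall>z. Im z \<le> 0 \<longrightarrow> f z = 0) \<and>
      (\<forall>g\<in>\<Gamma>. \<forall>\<tau>. Im \<tau> > 0 \<longrightarrow>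
          f (mob (of_intm g) \<tau>) = (case g of (a,b,c,d) \<Rightarrow> (of_int c * \<tau> + of_int d) powi k) * f \<tau>) \<and>
      (\<forall>\<sigma>\<in>SL2Z. holo_at_inf (slash k \<sigma> f))}"

text \<open>A key (lambda, mu) is a pair of partitions, represented as multisets of positive naturals;
  a state assigns to each key the coefficient f_{lambda,mu}, a function on H (normalised to vanish
  off H).  The element is sum a_{-lambda} b_{-mu} f_{lambda,mu}(b).\<close>

type_synonym key = "nat multiset \<times> nat multiset"
type_synonym st = "key \<Rightarrow> complex \<Rightarrow> complex"

definition maskH :: "(complex \<Rightarrow> complex) \<Rightarrow> complex \<Rightarrow> complex" where
  "maskH f = (\<lambda>z. if Im z > 0 then f z else 0)"

definition mono :: "key \<Rightarrow> (complex \<Rightarrow> complex) \<Rightarrow> st" where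
  "mono k f = (\<lambda>k'. if k' = k then maskH f else (\<lambda>_. 0))"

definition supp :: "st \<Rightarrow> key set" where
  "supp s = {k. s k \<noteq> (\<lambda>_. 0)}"

definition Dch :: "st set" where
  "Dch = {s. finite (supp s) \<and> (\<forall>k\<in>supp s. 0 \<notin># fst k \<and> 0 \<notin># snd k) \<and>
            (\<forall>k. s k holomorphic_on upper \<and> (\<forall>z. Im z \<le> 0 \<longrightarrow> s k z = 0))}"

text \<open>linear extension of an operation defined on monomials\<close>
definition lift :: "(key \<Rightarrow> (complex \<Rightarrow> complex) \<Rightarrow> st) \<Rightarrow> st \<Rightarrow> st" where
  "lift F s = (\<lambda>k z. \<Sum>k'\<in>supp s. F k' (s k') k z)"

definition smul :: "complex \<Rightarrow> st \<Rightarrow> st" where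
  "smul c s = (\<lambda>k z. c * s k z)"

definition sadd :: "st \<Rightarrow> st \<Rightarrow> st" where
  "sadd s t = (\<lambda>k z. s k z + t k z)"

text \<open>Heisenberg modes: [a_m,b_n] = delta_{m,-n}; a_m 1 = 0 (m \<ge> 0), b_n 1 = 0 (n > 0),
  b_0 acts as multiplication by tau, a_0 as d/dtau.\<close>
definition amode_m :: "int \<Rightarrow> key \<Rightarrow> (complex \<Rightarrow> complex) \<Rightarrow> st" where
  "amode_m n k f = (case k of (l, m) \<Rightarrow>
     if n < 0 then mono (l + {#nat (-n)#}, m) f
     else if n = 0 then mono (l, m) (deriv f)
     else smul (of_nat (count m (nat n))) (mono (l, m - {#nat n#}) f))"

definition bmode_m :: "int \<Rightarrow> key \<Rightarrow> (complex \<Rightarrow> complex) \<Rightarrow> st" where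
  "bmode_m n k f = (case k of (l, m) \<Rightarrow>
     if n < 0 then mono (l, m + {#nat (-n)#}) f
     else if n = 0 then mono (l, m) (\<lambda>z. z * f z)
     else smul (- of_nat (count l (nat n))) (mono (l - {#nat n#}, m) f))"

definition amode :: "int \<Rightarrow> st \<Rightarrow> st" where "amode n = lift (amode_m n)"
definition bmode :: "int \<Rightarrow> st \<Rightarrow> st" where "bmode n = lift (bmode_m n)"

text \<open>multiplication by g(b_0)\<close>
definition multop :: "(complex \<Rightarrow> complex) \<Rightarrow> st \<Rightarrow> st" where
  "multop g = lift (\<lambda>k f. mono k (\<lambda>z. g z * f z))"

text \<open>Coefficient of z^N in Y(phi,z) = sum_i phi^(i)(b)/i! (sum_{n\<noteq>0} b_n z^{-n})^i, applied to s.
  (Only finitely many terms are nonzero on a given state.)\<close>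
definition Ycoef :: "(complex \<Rightarrow> complex) \<Rightarrow> int \<Rightarrow> st \<Rightarrow> st" where
  "Ycoef \<phi> N s = (\<lambda>k z. \<Sum>\<^sub>\<infinity>ms\<in>{ms::int list. (\<forall>m\<in>set ms. m \<noteq> 0) \<and> sum_list ms = - N}.
       multop ((deriv ^^ length ms) \<phi>) (foldr bmode ms s) k z / fact (length ms))"

text \<open>Coefficient of z^{n-1} in the normally ordered product :a(z) Y(h,z):.\<close>
definition NOcoef :: "(complex \<Rightarrow> complex) \<Rightarrow> int \<Rightarrow> st \<Rightarrow> st" where
  "NOcoef h n s = (\<lambda>k z. \<Sum>\<^sub>\<infinity>m\<in>(UNIV::int set).
       (if m < 0 then amode m (Ycoef h (n + m) s) else Ycoef h (n + m) (amode m s)) k z)"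

text \<open>pi(g) a_{-n} pi(g)^{-1}: the (-n)-th mode of Y(pi(g)a_{-1}, z), where
  pi(g) a_{-1} = a_{-1}(gamma b + delta)^2 + 2 gamma^2 b_{-1}.\<close>
definition Atr :: "rmat \<Rightarrow> nat \<Rightarrow> st \<Rightarrow> st" where
  "Atr g n s = (case g of (a,b,c,d) \<Rightarrow>
     sadd (NOcoef (\<lambda>\<tau>. (of_real c * \<tau> + of_real d)^2) (int n) s)
          (smul (2 * (of_real c)^2 * of_nat n) (bmode (- int n) s)))"

text \<open>pi(g) b_{-n} pi(g)^{-1}: the coefficient of z^n in Y(pi(g) b, z), pi(g) b = (alpha b+beta)/(gamma b+delta).\<close>
definition Btr :: "rmat \<Rightarrow> nat \<Rightarrow> st \<Rightarrow> st" where
  "Btr g n s = Ycoef (mob g) (int n) s"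

text \<open>pi(g)(a_{-lambda} b_{-mu} f(b)) = (pi(g)a_{-lambda}) (pi(g) b_{-mu}) f(g b).\<close>
definition pi_m :: "rmat \<Rightarrow> key \<Rightarrow> (complex \<Rightarrow> complex) \<Rightarrow> st" where
  "pi_m g k f = (case k of (l, m) \<Rightarrow>
     foldr (Atr g) (sorted_list_of_multiset l)
       (foldr (Btr g) (sorted_list_of_multiset m) (mono ({#}, {#}) (f \<circ> mob g))))"

definition piact :: "rmat \<Rightarrow> st \<Rightarrow> st" where
  "piact g = lift (pi_m g)"

definition plist :: "nat multiset \<Rightarrow> nat list" where
  "plist l = rev (sorted_list_of_multiset l)"

definition part_gt :: "nat multiset \<Rightarrow> nat multiset \<Rightarrow> bool" where
  "part_gt l l' \<longleftrightarrow> (let x = plist l; y = plist l' in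
     (\<exists>j < min (length x) (length y). take j x = take j y \<and> x ! j > y ! j) \<or>
     (length x > length y \<and> take (length y) x = y))"

definition lval :: "key \<Rightarrow> int" where
  "lval k = int (size (fst k)) - int (size (snd k))"

definition pair_gt :: "key \<Rightarrow> key \<Rightarrow> bool" where
  "pair_gt k k' \<longleftrightarrow> lval k > lval k' \<or> (lval k = lval k' \<and> part_gt (fst k) (fst k')) \<or>
     (fst k = fst k' \<and> size (snd k) = size (snd k') \<and> part_gt (snd k') (snd k))"

definition pair_le :: "key \<Rightarrow> key \<Rightarrow> bool" where
  "pair_le k k' \<longleftrightarrow> k = k' \<or> pair_gt k' k"

definition wt :: "key \<Rightarrow> nat" where
  "wt k = sum_mset (fst k) + sum_mset (snd k)"

definition is_partition :: "nat multiset \<Rightarrow> bool" where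
  "is_partition l \<longleftrightarrow> 0 \<notin># l"

definition Vfilt :: "key \<Rightarrow> st set" where
  "Vfilt k0 = {v \<in> Dch. \<forall>k\<in>supp v. pair_le k k0 \<and> wt k = wt k0}"

definition Vinv0 :: "imat set \<Rightarrow> key \<Rightarrow> st set" where
  "Vinv0 \<Gamma> k0 = {v \<in> Vfilt k0. (\<forall>g\<in>\<Gamma>. piact (of_intm g) v = v) \<and>
      (\<forall>\<rho>\<in>SL2Z. \<forall>k. holo_at_inf (piact (of_intm \<rho>) v k))}"

end

theory Submission imports Defs "HOL-Complex_Analysis.Complex_Analysis" begin

declare of_nat_sum_mset[simp del]

definition nz :: "key \<Rightarrow> bool" where "nz k \<longleftrightarrow> 0 \<notin># fst k \<and> 0 \<notin># snd k"
definition okW :: "int \<Rightarrow> st \<Rightarrow> bool" where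
  "okW W s \<longleftrightarrow> (\<forall>k. s k \<noteq> (\<lambda>_. 0) \<longrightarrow> nz k \<and> int (wt k) \<le> W)"
definition bnd :: "int \<Rightarrow> st \<Rightarrow> bool" where
  "bnd L s \<longleftrightarrow> (\<forall>k. L < lval k \<longrightarrow> s k = (\<lambda>_. 0))"

lemma size_le_sum_mset: "0 \<notin># (l::nat multiset) \<Longrightarrow> size l \<le> sum_mset l"
proof (induction l)
  case empty then show ?case by simp
next
  case (add x l) then show ?case by (cases x) auto
qed

lemma mem_le_sum_mset: "x \<in># (l::nat multiset) \<Longrightarrow> x \<le> sum_mset l"
  by (auto dest!: multi_member_split)

lemma finite_parts: "finite {l::nat multiset. 0 \<notin># l \<and> sum_mset l \<le> W}"
proof -
  have "{l::nat multiset. 0 \<notin># l \<and> sum_mset l \<le> W} \<subseteq> mset ` {xs. set xs \<subseteq> {0..W} \<and> length xs \<le> W}"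
  proof
    fix l :: "nat multiset" assume "l \<in> {l. 0 \<notin># l \<and> sum_mset l \<le> W}"
    then have h: "0 \<notin># l" "sum_mset l \<le> W" by auto
    have len: "length (sorted_list_of_multiset l) = size l"
      using size_mset[of "sorted_list_of_multiset l"] by simp
    have st: "set (sorted_list_of_multiset l) = set_mset l"
      by simp
    have "\<forall>x\<in>set_mset l. x \<le> W" using mem_le_sum_mset[of _ l] h(2) le_trans by blast
    moreover have "size l \<le> W" using size_le_sum_mset[OF h(1)] h(2) by linarith
    ultimately have "sorted_list_of_multiset l \<in> {xs. set xs \<subseteq> {0..W} \<and> length xs \<le> W}"
      using len st by auto
    then show "l \<in> mset ` {xs. set xs \<subseteq> {0..W} \<and> length xs \<le> W}"
      by (rule rev_image_eqI) simp
  qed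
  moreover have "finite {xs. set xs \<subseteq> {0..W} \<and> length xs \<le> W}"
    using finite_lists_length_le[of "{0..W}" W] by simp
  ultimately show ?thesis using finite_imageI finite_subset by blast
qed

lemma finite_keys: "finite {k. nz k \<and> int (wt k) \<le> W}"
proof -
  have "{k. nz k \<and> int (wt k) \<le> W} \<subseteq> {l::nat multiset. 0 \<notin># l \<and> sum_mset l \<le> nat W} \<times> {l::nat multiset. 0 \<notin># l \<and> sum_mset l \<le> nat W}"
  proof (rule subsetI)
    fix k assume "k \<in> {k. nz k \<and> int (wt k) \<le> W}"
    then obtain a b where k: "k = (a,b)" and "nz (a,b)" "int (wt (a,b)) \<le> W" by (cases k) auto
    then have h: "0 \<notin># a" "0 \<notin># b" "int (wt (a,b)) \<le> W" by (auto simp: nz_def)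
    have w: "wt (a,b) = sum_mset a + sum_mset b" by (simp add: wt_def)
    have nn: "\<And>x::nat. int x \<le> W \<Longrightarrow> x \<le> nat W" by linarith
    have "sum_mset a + sum_mset b \<le> nat W" using nn[OF h(3)] unfolding w .
    then show "k \<in> {l::nat multiset. 0 \<notin># l \<and> sum_mset l \<le> nat W} \<times> {l::nat multiset. 0 \<notin># l \<and> sum_mset l \<le> nat W}"
      using h(1,2) k by auto
  qed
  then show ?thesis using finite_parts finite_SigmaI finite_subset by blast
qed

lemma okW_finite: "okW W s \<Longrightarrow> finite (supp s)"
  unfolding okW_def supp_def
  by (rule finite_subset[OF _ finite_keys[of W]]) auto

lemma lift_zero: "(\<And>k'. k' \<in> supp s \<Longrightarrow> F k' (s k') k = (\<lambda>_. 0)) \<Longrightarrow> lift F s k = (\<lambda>_. 0)"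
  unfolding lift_def by (auto simp: fun_eq_iff)

lemma lift_prop:
  assumes "\<And>k' k. k' \<in> supp s \<Longrightarrow> F k' (s k') k \<noteq> (\<lambda>_. 0) \<Longrightarrow> P k"
  shows "lift F s k \<noteq> (\<lambda>_. 0) \<Longrightarrow> P k"
  using lift_zero[of s F k] assms by blast

lemma supp_iff: "k \<in> supp s \<longleftrightarrow> s k \<noteq> (\<lambda>_. 0)" by (simp add: supp_def)

lemma mono_ne: "mono k f k' \<noteq> (\<lambda>_. 0) \<Longrightarrow> k' = k"
  by (auto simp: mono_def split: if_splits)

lemma smul_mono_ne: "smul c (mono k f) k' \<noteq> (\<lambda>_. 0) \<Longrightarrow> k' = k \<and> c \<noteq> 0"
  by (auto simp: mono_def smul_def fun_eq_iff split: if_splits)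

lemma sum_mset_remove': "x \<in># (m::nat multiset) \<Longrightarrow> sum_mset (m - {#x#}) + x = sum_mset m"
proof -
  assume a: "x \<in># m"
  have "sum_mset m = sum_mset (add_mset x (m - {#x#}))" using insert_DiffM[OF a] by simp
  then show ?thesis by simp
qed


lemma amode_m_ne:
  assumes "amode_m n k f k'' \<noteq> (\<lambda>_. 0)"
  shows "(nz k \<longrightarrow> nz k'') \<and> int (wt k'') = int (wt k) - n \<and> lval k'' \<le> lval k + 1 \<and> (n = 0 \<longrightarrow> lval k'' = lval k)"
proof -
  obtain l m where k: "k = (l, m)" by (cases k)
  consider "n < 0" | "n = 0" | "n > 0" by linarith
  then show ?thesis
  proof cases
    case 1
    then have "k'' = (l + {#nat (-n)#}, m)" using assms by (auto simp: amode_m_def k dest: mono_ne)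
    then show ?thesis using 1 by (auto simp: k nz_def wt_def lval_def)
  next
    case 2
    then have "k'' = (l, m)" using assms by (auto simp: amode_m_def k dest: mono_ne)
    then show ?thesis using 2 by (auto simp: k nz_def wt_def lval_def)
  next
    case 3
    then have "k'' = (l, m - {#nat n#}) \<and> count m (nat n) \<noteq> 0" using assms
      by (auto simp: amode_m_def k dest!: smul_mono_ne)
    then have kk: "k'' = (l, m - {#nat n#})" and mem: "nat n \<in># m" by auto
    have "size (m - {#nat n#}) = size m - 1" using mem by (simp add: size_Diff_submset)
    moreover have "size m \<ge> 1" using mem by (metis One_nat_def Suc_leI nonempty_has_size size_eq_0_iff_empty empty_iff set_mset_empty)
    moreover have "sum_mset (m - {#nat n#}) + nat n = sum_mset m" using sum_mset_remove'[OF mem] .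
    ultimately show ?thesis using 3 by (auto simp: k kk nz_def wt_def lval_def dest: in_diffD)
  qed
qed

lemma bmode_m_ne:
  assumes "bmode_m n k f k'' \<noteq> (\<lambda>_. 0)"
  shows "(nz k \<longrightarrow> nz k'') \<and> int (wt k'') = int (wt k) - n \<and> lval k'' \<le> lval k \<and> (n \<noteq> 0 \<longrightarrow> lval k'' \<le> lval k - 1)"
proof -
  obtain l m where k: "k = (l, m)" by (cases k)
  consider "n < 0" | "n = 0" | "n > 0" by linarith
  then show ?thesis
  proof cases
    case 1
    then have "k'' = (l, m + {#nat (-n)#})" using assms by (auto simp: bmode_m_def k dest: mono_ne)
    then show ?thesis using 1 by (auto simp: k nz_def wt_def lval_def)
  next
    case 2
    then have "k'' = (l, m)" using assms by (auto simp: bmode_m_def k dest: mono_ne)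
    then show ?thesis using 2 by (auto simp: k nz_def wt_def lval_def)
  next
    case 3
    then have "k'' = (l - {#nat n#}, m) \<and> - of_nat (count l (nat n)) \<noteq> (0::complex)" using assms
      by (auto simp: bmode_m_def k dest!: smul_mono_ne)
    then have kk: "k'' = (l - {#nat n#}, m)" and mem: "nat n \<in># l" by auto
    have "size (l - {#nat n#}) = size l - 1" using mem by (simp add: size_Diff_submset)
    moreover have "size l \<ge> 1" using mem by (metis One_nat_def Suc_leI nonempty_has_size size_eq_0_iff_empty empty_iff set_mset_empty)
    moreover have "sum_mset (l - {#nat n#}) + nat n = sum_mset l" using sum_mset_remove'[OF mem] .
    ultimately show ?thesis using 3 by (auto simp: k kk nz_def wt_def lval_def dest: in_diffD)
  qed
qed


lemma okW_liftI:
  assumes "\<And>k' k. k' \<in> supp s \<Longrightarrow> F k' (s k') k \<noteq> (\<lambda>_. 0) \<Longrightarrow> nz k \<and> int (wt k) \<le> W'"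
  shows "okW W' (lift F s)"
  unfolding okW_def using lift_prop[of s F "\<lambda>k. nz k \<and> int (wt k) \<le> W'"] assms by blast

lemma bnd_liftI:
  assumes "\<And>k' k. k' \<in> supp s \<Longrightarrow> F k' (s k') k \<noteq> (\<lambda>_. 0) \<Longrightarrow> lval k \<le> L'"
  shows "bnd L' (lift F s)"
  unfolding bnd_def using lift_prop[of s F "\<lambda>k. lval k \<le> L'"] assms by force

lemma okW_supp: "okW W s \<Longrightarrow> k \<in> supp s \<Longrightarrow> nz k \<and> int (wt k) \<le> W"
  unfolding okW_def supp_def by blast

lemma bnd_supp: "bnd L s \<Longrightarrow> k \<in> supp s \<Longrightarrow> lval k \<le> L"
proof -
  assume a: "bnd L s" "k \<in> supp s"
  have "\<not> L < lval k" using a unfolding bnd_def supp_def by blast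
  then show ?thesis by simp
qed

lemma okW_amode: assumes "okW W s" shows "okW (W - n) (amode n s)"
  unfolding amode_def
proof (rule okW_liftI)
  fix k' k assume "k' \<in> supp s" and ne: "amode_m n k' (s k') k \<noteq> (\<lambda>_. 0)"
  then have "nz k' \<and> int (wt k') \<le> W" using okW_supp[OF assms(1)] by blast
  with amode_m_ne[OF ne] show "nz k \<and> int (wt k) \<le> W - n" by auto
qed

lemma bnd_amode: assumes "bnd L s" shows "bnd (L + 1) (amode n s)"
  unfolding amode_def
proof (rule bnd_liftI)
  fix k' k assume "k' \<in> supp s" and ne: "amode_m n k' (s k') k \<noteq> (\<lambda>_. 0)"
  then have "lval k' \<le> L" using bnd_supp[OF assms(1)] by blast
  with amode_m_ne[OF ne] assms show "lval k \<le> L + 1" by auto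
qed

lemma bnd_amode0: assumes "bnd L s" shows "bnd L (amode 0 s)"
  unfolding amode_def
proof (rule bnd_liftI)
  fix k' k assume "k' \<in> supp s" and ne: "amode_m 0 k' (s k') k \<noteq> (\<lambda>_. 0)"
  then have "lval k' \<le> L" using bnd_supp[OF assms(1)] by blast
  with amode_m_ne[OF ne] assms show "lval k \<le> L" by auto
qed

lemma okW_bmode: assumes "okW W s" shows "okW (W - n) (bmode n s)"
  unfolding bmode_def
proof (rule okW_liftI)
  fix k' k assume "k' \<in> supp s" and ne: "bmode_m n k' (s k') k \<noteq> (\<lambda>_. 0)"
  then have "nz k' \<and> int (wt k') \<le> W" using okW_supp[OF assms(1)] by blast
  with bmode_m_ne[OF ne] show "nz k \<and> int (wt k) \<le> W - n" by auto
qed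

lemma bnd_bmode: assumes "bnd L s" "n \<noteq> 0" shows "bnd (L - 1) (bmode n s)"
  unfolding bmode_def
proof (rule bnd_liftI)
  fix k' k assume "k' \<in> supp s" and ne: "bmode_m n k' (s k') k \<noteq> (\<lambda>_. 0)"
  then have "lval k' \<le> L" using bnd_supp[OF assms(1)] by blast
  with bmode_m_ne[OF ne] assms show "lval k \<le> L - 1" by auto
qed

lemma multop_ne: "multop g s k \<noteq> (\<lambda>_. 0) \<Longrightarrow> k \<in> supp s"
  unfolding multop_def using lift_prop[of s "\<lambda>k f. mono k (\<lambda>z. g z * f z)" "\<lambda>k. k \<in> supp s" k]
  by (auto dest: mono_ne)

lemma okW_multop: "okW W s \<Longrightarrow> okW W (multop g s)"
  using multop_ne okW_supp unfolding okW_def by blast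

lemma bnd_multop: "bnd L s \<Longrightarrow> bnd L (multop g s)"
proof -
  assume a: "bnd L s"
  show ?thesis unfolding bnd_def
  proof (intro allI impI)
    fix k assume "L < lval k"
    then show "multop g s k = (\<lambda>_. 0)" using multop_ne[of g s k] bnd_supp[OF a, of k] by force
  qed
qed

lemma okW_foldr: "(\<forall>m\<in>set ms. m \<noteq> 0) \<Longrightarrow> okW W s \<Longrightarrow> okW (W - sum_list ms) (foldr bmode ms s)"
proof (induction ms arbitrary: W)
  case Nil then show ?case by simp
next
  case (Cons m ms)
  then have "okW (W - sum_list ms) (foldr bmode ms s)" by simp
  then have "okW (W - sum_list ms - m) (bmode m (foldr bmode ms s))" by (rule okW_bmode)
  then show ?case by (simp add: algebra_simps)
qed

lemma bnd_foldr: "(\<forall>m\<in>set ms. m \<noteq> 0) \<Longrightarrow> bnd L s \<Longrightarrow> bnd (L - int (length ms)) (foldr bmode ms s)"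
proof (induction ms arbitrary: L)
  case Nil then show ?case by simp
next
  case (Cons m ms)
  then have "bnd (L - int (length ms)) (foldr bmode ms s)" by simp
  then have "bnd (L - int (length ms) - 1) (bmode m (foldr bmode ms s))" using Cons.prems by (intro bnd_bmode) auto
  then show ?case by (simp add: algebra_simps)
qed

lemma Ycoef_ne:
  assumes "Ycoef \<phi> N s k \<noteq> (\<lambda>_. 0)"
  shows "\<exists>ms. (\<forall>m\<in>set ms. m \<noteq> 0) \<and> sum_list ms = - N \<and>
     multop ((deriv ^^ length ms) \<phi>) (foldr bmode ms s) k \<noteq> (\<lambda>_. 0)"
proof (rule ccontr)
  assume "\<not> ?thesis"
  then have "\<And>ms z. ms \<in> {ms::int list. (\<forall>m\<in>set ms. m \<noteq> 0) \<and> sum_list ms = - N} \<Longrightarrow>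
      multop ((deriv ^^ length ms) \<phi>) (foldr bmode ms s) k z / fact (length ms) = 0"
    by (auto simp: fun_eq_iff)
  then have "Ycoef \<phi> N s k = (\<lambda>_. 0)"
    unfolding Ycoef_def by (auto simp: fun_eq_iff intro!: infsum_0)
  then show False using assms by simp
qed

lemma okW_Ycoef: "okW W s \<Longrightarrow> okW (W + N) (Ycoef \<phi> N s)"
proof -
  assume a: "okW W s"
  show ?thesis unfolding okW_def
  proof (intro allI impI)
    fix k assume "Ycoef \<phi> N s k \<noteq> (\<lambda>_. 0)"
    from Ycoef_ne[OF this] obtain ms where ms: "\<forall>m\<in>set ms. m \<noteq> 0" "sum_list ms = - N"
      "multop ((deriv ^^ length ms) \<phi>) (foldr bmode ms s) k \<noteq> (\<lambda>_. 0)" by blast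
    have "okW (W - sum_list ms) (multop ((deriv ^^ length ms) \<phi>) (foldr bmode ms s))"
      by (intro okW_multop okW_foldr ms a)
    then have "nz k \<and> int (wt k) \<le> W - sum_list ms" using ms(3) unfolding okW_def by blast
    then show "nz k \<and> int (wt k) \<le> W + N" using ms(2) by simp
  qed
qed

lemma bnd_Ycoef: "bnd L s \<Longrightarrow> bnd L (Ycoef \<phi> N s)"
proof -
  assume a: "bnd L s"
  show ?thesis unfolding bnd_def
  proof (intro allI impI)
    fix k assume lk: "L < lval k"
    show "Ycoef \<phi> N s k = (\<lambda>_. 0)"
    proof (rule ccontr)
      assume "Ycoef \<phi> N s k \<noteq> (\<lambda>_. 0)"
      from Ycoef_ne[OF this] obtain ms where ms: "\<forall>m\<in>set ms. m \<noteq> 0" "sum_list ms = - N"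
        "multop ((deriv ^^ length ms) \<phi>) (foldr bmode ms s) k \<noteq> (\<lambda>_. 0)" by blast
      have "bnd (L - int (length ms)) (multop ((deriv ^^ length ms) \<phi>) (foldr bmode ms s))"
        by (intro bnd_multop bnd_foldr ms a)
      then have "\<not> L - int (length ms) < lval k" using ms(3) unfolding bnd_def by blast
      then show False using lk by simp
    qed
  qed
qed

lemma bnd_Ycoef_nz: "bnd L s \<Longrightarrow> N \<noteq> 0 \<Longrightarrow> bnd (L - 1) (Ycoef \<phi> N s)"
proof -
  assume a: "bnd L s" and N: "N \<noteq> 0"
  show ?thesis unfolding bnd_def
  proof (intro allI impI)
    fix k assume lk: "L - 1 < lval k"
    show "Ycoef \<phi> N s k = (\<lambda>_. 0)"
    proof (rule ccontr)
      assume "Ycoef \<phi> N s k \<noteq> (\<lambda>_. 0)"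
      from Ycoef_ne[OF this] obtain ms where ms: "\<forall>m\<in>set ms. m \<noteq> 0" "sum_list ms = - N"
        "multop ((deriv ^^ length ms) \<phi>) (foldr bmode ms s) k \<noteq> (\<lambda>_. 0)" by blast
      have "ms \<noteq> []" using ms(2) N by auto
      then have "length ms \<ge> 1" by (cases ms) auto
      have "bnd (L - int (length ms)) (multop ((deriv ^^ length ms) \<phi>) (foldr bmode ms s))"
        by (intro bnd_multop bnd_foldr ms a)
      then have "\<not> L - int (length ms) < lval k" using ms(3) unfolding bnd_def by blast
      then show False using lk \<open>length ms \<ge> 1\<close> by simp
    qed
  qed
qed


lemma lift_val: "lift F s k z = (\<Sum>k'\<in>supp s. F k' (s k') k z)"
  by (simp add: lift_def)

lemma not_supp: "k \<notin> supp s \<Longrightarrow> s k z = 0"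
  by (simp add: supp_def)

lemma multop_val:
  assumes "finite (supp s)"
  shows "multop g s k z = (if 0 < Im z then g z * s k z else 0)"
proof -
  have "multop g s k z = (\<Sum>k'\<in>supp s. if k' = k then maskH (\<lambda>z. g z * s k z) z else 0)"
    unfolding multop_def lift_val by (intro sum.cong) (auto simp: mono_def)
  also have "\<dots> = (if k \<in> supp s then maskH (\<lambda>z. g z * s k z) z else 0)"
    using assms by simp
  also have "\<dots> = (if 0 < Im z then g z * s k z else 0)"
    using not_supp[of k s z] by (auto simp: maskH_def)
  finally show ?thesis .
qed

lemma bmode_neg_val:
  assumes "finite (supp s)" "n > 0"
  shows "bmode (- int n) s k z = (if n \<in># snd k then maskH (s (fst k, snd k - {#n#})) z else 0)"
proof (cases "n \<in># snd k")
  case True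
  define k0 where "k0 = (fst k, snd k - {#n#})"
  have "bmode (- int n) s k z = (\<Sum>k'\<in>supp s. if k' = k0 then maskH (s k0) z else 0)"
    unfolding bmode_def lift_val
  proof (intro sum.cong refl)
    fix k' assume "k' \<in> supp s"
    have "(k = (fst k', snd k' + {#n#})) = (k' = k0)"
      using True unfolding k0_def by (cases k; cases k') auto
    then show "bmode_m (- int n) k' (s k') k z = (if k' = k0 then maskH (s k0) z else 0)"
      using assms(2) by (cases k') (auto simp: bmode_m_def mono_def)
  qed
  also have "\<dots> = (if k0 \<in> supp s then maskH (s k0) z else 0)"
    using assms by simp
  also have "\<dots> = maskH (s k0) z"
    using not_supp[of k0 s] by (auto simp: maskH_def)
  finally show ?thesis using True k0_def by simp
next
  case False
  have "bmode (- int n) s k z = (\<Sum>k'\<in>supp s. 0)"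
    unfolding bmode_def lift_val
  proof (intro sum.cong refl)
    fix k' assume "k' \<in> supp s"
    have "k \<noteq> (fst k', snd k' + {#n#})" using False by auto
    then show "bmode_m (- int n) k' (s k') k z = 0"
      using assms(2) by (cases k') (auto simp: bmode_m_def mono_def)
  qed
  then show ?thesis using False by simp
qed

lemma amode_neg_val:
  assumes "finite (supp s)" "n > 0"
  shows "amode (- int n) s k z = (if n \<in># fst k then maskH (s (fst k - {#n#}, snd k)) z else 0)"
proof (cases "n \<in># fst k")
  case True
  define k0 where "k0 = (fst k - {#n#}, snd k)"
  have "amode (- int n) s k z = (\<Sum>k'\<in>supp s. if k' = k0 then maskH (s k0) z else 0)"
    unfolding amode_def lift_val
  proof (intro sum.cong refl)
    fix k' assume "k' \<in> supp s"
    have "(k = (fst k' + {#n#}, snd k')) = (k' = k0)"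
      using True unfolding k0_def by (cases k; cases k') auto
    then show "amode_m (- int n) k' (s k') k z = (if k' = k0 then maskH (s k0) z else 0)"
      using assms(2) by (cases k') (auto simp: amode_m_def mono_def)
  qed
  also have "\<dots> = (if k0 \<in> supp s then maskH (s k0) z else 0)"
    using assms by simp
  also have "\<dots> = maskH (s k0) z"
    using not_supp[of k0 s] by (auto simp: maskH_def)
  finally show ?thesis using True k0_def by simp
next
  case False
  have "amode (- int n) s k z = (\<Sum>k'\<in>supp s. 0)"
    unfolding amode_def lift_val
  proof (intro sum.cong refl)
    fix k' assume "k' \<in> supp s"
    have "k \<noteq> (fst k' + {#n#}, snd k')" using False by auto
    then show "amode_m (- int n) k' (s k') k z = 0"
      using assms(2) by (cases k') (auto simp: amode_m_def mono_def)
  qed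
  then show ?thesis using False by simp
qed

lemma bnd_zero: assumes "bnd L s" "L < lval k" shows "s k z = 0"
proof -
  have "s k = (\<lambda>_. 0)" using assms unfolding bnd_def by blast
  then show ?thesis by simp
qed

lemma Ycoef_0_val:
  assumes "okW W s" "bnd L s" "L \<le> lval k"
  shows "Ycoef \<phi> 0 s k z = (if 0 < Im z then \<phi> z * s k z else 0)"
proof -
  let ?I = "{ms::int list. (\<forall>m\<in>set ms. m \<noteq> 0) \<and> sum_list ms = - 0}"
  let ?f = "\<lambda>ms. multop ((deriv ^^ length ms) \<phi>) (foldr bmode ms s) k z / fact (length ms)"
  have "infsum ?f ?I = infsum ?f {[]}"
  proof (rule infsum_cong_neutral)
    fix ms assume "ms \<in> ?I - {[]}"
    then have ms: "\<forall>m\<in>set ms. m \<noteq> 0" "ms \<noteq> []" by auto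
    then have "length ms \<ge> 1" by (cases ms) auto
    have "bnd (L - int (length ms)) (multop ((deriv ^^ length ms) \<phi>) (foldr bmode ms s))"
      by (intro bnd_multop bnd_foldr ms assms)
    moreover have "L - int (length ms) < lval k" using assms(3) \<open>length ms \<ge> 1\<close> by linarith
    ultimately have "multop ((deriv ^^ length ms) \<phi>) (foldr bmode ms s) k z = 0" by (rule bnd_zero)
    then show "?f ms = 0" by simp
  qed auto
  also have "\<dots> = multop \<phi> s k z" by simp
  also have "\<dots> = (if 0 < Im z then \<phi> z * s k z else 0)"
    using multop_val okW_finite[OF assms(1)] by blast
  finally show ?thesis unfolding Ycoef_def by simp
qed

lemma Ycoef_n_val:
  assumes "okW W s" "bnd L s" "L - 1 \<le> lval k" "n > 0"
  shows "Ycoef \<phi> (int n) s k z = multop (deriv \<phi>) (bmode (- int n) s) k z"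
proof -
  let ?I = "{ms::int list. (\<forall>m\<in>set ms. m \<noteq> 0) \<and> sum_list ms = - int n}"
  let ?f = "\<lambda>ms. multop ((deriv ^^ length ms) \<phi>) (foldr bmode ms s) k z / fact (length ms)"
  have "infsum ?f ?I = infsum ?f {[- int n]}"
  proof (rule infsum_cong_neutral)
    fix ms assume "ms \<in> ?I - {[- int n]}"
    then have ms: "\<forall>m\<in>set ms. m \<noteq> 0" "sum_list ms = - int n" "ms \<noteq> [- int n]" by auto
    have "length ms \<ge> 2"
    proof (cases ms)
      case Nil then show ?thesis using ms assms(4) by auto
    next
      case (Cons a t) then show ?thesis using ms by (cases t) auto
    qed
    have "bnd (L - int (length ms)) (multop ((deriv ^^ length ms) \<phi>) (foldr bmode ms s))"
      by (intro bnd_multop bnd_foldr ms assms)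
    moreover have "L - int (length ms) < lval k" using assms(3) \<open>length ms \<ge> 2\<close> by linarith
    ultimately have "multop ((deriv ^^ length ms) \<phi>) (foldr bmode ms s) k z = 0" by (rule bnd_zero)
    then show "?f ms = 0" by simp
  next
    show "\<And>x. x \<in> {[- int n]} - ?I \<Longrightarrow> ?f x = 0" using assms(4) by auto
  qed auto
  also have "\<dots> = multop (deriv \<phi>) (bmode (- int n) s) k z" by simp
  finally show ?thesis unfolding Ycoef_def by simp
qed


lemma bnd_mono: assumes "bnd L s" "L \<le> L'" shows "bnd L' s"
  using assms unfolding bnd_def by auto

lemma NOcoef_ne:
  assumes "NOcoef h n s k \<noteq> (\<lambda>_. 0)"
  shows "\<exists>m. (if m < 0 then amode m (Ycoef h (n + m) s) else Ycoef h (n + m) (amode m s)) k \<noteq> (\<lambda>_. 0)"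
proof (rule ccontr)
  assume "\<not> ?thesis"
  then have "\<And>m z. (if m < 0 then amode m (Ycoef h (n + m) s) else Ycoef h (n + m) (amode m s)) k z = 0"
    by (auto simp: fun_eq_iff)
  then have "NOcoef h n s k = (\<lambda>_. 0)"
    unfolding NOcoef_def by (auto simp: fun_eq_iff intro!: infsum_0)
  then show False using assms by simp
qed

lemma okW_NOcoef: assumes "okW W s" shows "okW (W + n) (NOcoef h n s)"
  unfolding okW_def
proof (intro allI impI)
  fix k assume "NOcoef h n s k \<noteq> (\<lambda>_. 0)"
  from NOcoef_ne[OF this] obtain m where
    m: "(if m < 0 then amode m (Ycoef h (n + m) s) else Ycoef h (n + m) (amode m s)) k \<noteq> (\<lambda>_. 0)" by blast
  show "nz k \<and> int (wt k) \<le> W + n"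
  proof (cases "m < 0")
    case True
    have "okW (W + (n + m) - m) (amode m (Ycoef h (n + m) s))" by (intro okW_amode okW_Ycoef assms)
    moreover have "W + (n + m) - m = W + n" by simp
    ultimately have o: "okW (W + n) (amode m (Ycoef h (n + m) s))" by simp
    have "amode m (Ycoef h (n + m) s) k \<noteq> (\<lambda>_. 0)" using m True by simp
    then show ?thesis using okW_supp[OF o] supp_iff by blast
  next
    case False
    have "okW (W - m + (n + m)) (Ycoef h (n + m) (amode m s))" by (intro okW_amode okW_Ycoef assms)
    moreover have "W - m + (n + m) = W + n" by simp
    ultimately have o: "okW (W + n) (Ycoef h (n + m) (amode m s))" by simp
    have "Ycoef h (n + m) (amode m s) k \<noteq> (\<lambda>_. 0)" using m False by simp
    then show ?thesis using okW_supp[OF o] supp_iff by blast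
  qed
qed

lemma bnd_NOcoef: assumes "bnd L s" shows "bnd (L + 1) (NOcoef h n s)"
  unfolding bnd_def
proof (intro allI impI)
  fix k assume lk: "L + 1 < lval k"
  show "NOcoef h n s k = (\<lambda>_. 0)"
  proof (rule ccontr)
    assume "NOcoef h n s k \<noteq> (\<lambda>_. 0)"
    from NOcoef_ne[OF this] obtain m where
      m: "(if m < 0 then amode m (Ycoef h (n + m) s) else Ycoef h (n + m) (amode m s)) k \<noteq> (\<lambda>_. 0)" by blast
    show False
    proof (cases "m < 0")
      case True
      have "bnd (L + 1) (amode m (Ycoef h (n + m) s))" by (intro bnd_amode bnd_Ycoef assms)
      moreover have "amode m (Ycoef h (n + m) s) k \<noteq> (\<lambda>_. 0)" using m True by simp
      ultimately show ?thesis using lk unfolding bnd_def by blast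
    next
      case False
      have "bnd (L + 1) (Ycoef h (n + m) (amode m s))" by (intro bnd_amode bnd_Ycoef assms)
      moreover have "Ycoef h (n + m) (amode m s) k \<noteq> (\<lambda>_. 0)" using m False by simp
      ultimately show ?thesis using lk unfolding bnd_def by blast
    qed
  qed
qed

lemma okW_sadd: assumes "okW W s" "okW W t" shows "okW W (sadd s t)"
  unfolding okW_def
proof (intro allI impI)
  fix k assume a: "sadd s t k \<noteq> (\<lambda>_. 0)"
  have "s k \<noteq> (\<lambda>_. 0) \<or> t k \<noteq> (\<lambda>_. 0)"
  proof (rule ccontr)
    assume "\<not> ?thesis"
    then have "sadd s t k = (\<lambda>_. 0)" by (simp add: sadd_def)
    then show False using a by simp
  qed
  then show "nz k \<and> int (wt k) \<le> W" using okW_supp[OF assms(1)] okW_supp[OF assms(2)] supp_iff by blast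
qed

lemma okW_smul: "okW W s \<Longrightarrow> okW W (smul c s)"
  unfolding okW_def smul_def by (auto simp: fun_eq_iff)

lemma bnd_sadd: "bnd W s \<Longrightarrow> bnd W t \<Longrightarrow> bnd W (sadd s t)"
  unfolding bnd_def sadd_def by (auto simp: fun_eq_iff)

lemma bnd_smul: "bnd W s \<Longrightarrow> bnd W (smul c s)"
  unfolding bnd_def smul_def by (auto simp: fun_eq_iff)

lemma okW_Atr: assumes "okW W s" shows "okW (W + int n) (Atr g n s)"
proof -
  obtain a b c d where g: "g = (a,b,c,d)" by (cases g) auto
  show ?thesis unfolding Atr_def g
    by (simp, intro okW_sadd okW_smul okW_NOcoef assms)
      (use okW_bmode[OF assms, of "- int n"] in simp)
qed

lemma bnd_Atr: assumes "bnd L s" "n > 0" shows "bnd (L + 1) (Atr g n s)"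
proof -
  obtain a b c d where g: "g = (a,b,c,d)" by (cases g) auto
  have "bnd L (bmode (- int n) s)"
    using bnd_mono[OF bnd_bmode[OF assms(1), of "- int n"]] assms(2) by simp
  show ?thesis unfolding Atr_def g
    by (simp, intro bnd_sadd bnd_smul bnd_NOcoef assms(1) bnd_mono[OF \<open>bnd L (bmode (- int n) s)\<close>]) simp
qed


lemma okW_Btr: assumes "okW W s" shows "okW (W + int n) (Btr g n s)"
  unfolding Btr_def by (rule okW_Ycoef[OF assms])

lemma bnd_Btr: assumes "bnd L s" "n > 0" shows "bnd (L - 1) (Btr g n s)"
  unfolding Btr_def by (rule bnd_Ycoef_nz[OF assms(1)]) (use assms(2) in simp)

lemma NOcoef_val:
  assumes "okW W s" "bnd L s" "L + 1 \<le> lval k" "n > 0"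
  shows "NOcoef h (int n) s k z = amode (- int n) (Ycoef h 0 s) k z"
proof -
  let ?f = "\<lambda>m. (if m < 0 then amode m (Ycoef h (int n + m) s) else Ycoef h (int n + m) (amode m s)) k z"
  have "infsum ?f UNIV = infsum ?f {- int n}"
  proof (rule infsum_cong_neutral)
    fix m assume "m \<in> UNIV - {- int n}"
    then have mn: "int n + m \<noteq> 0" by auto
    show "?f m = 0"
    proof (cases "m < 0")
      case True
      have "bnd (L - 1 + 1) (amode m (Ycoef h (int n + m) s))"
        by (intro bnd_amode bnd_Ycoef_nz assms mn)
      then have "amode m (Ycoef h (int n + m) s) k z = 0" by (rule bnd_zero) (use assms(3) in simp)
      then show ?thesis using True by simp
    next
      case False
      have "bnd (L + 1 - 1) (Ycoef h (int n + m) (amode m s))"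
        by (intro bnd_amode bnd_Ycoef_nz assms mn)
      then have "Ycoef h (int n + m) (amode m s) k z = 0" by (rule bnd_zero) (use assms(3) in simp)
      then show ?thesis using False by simp
    qed
  qed auto
  also have "\<dots> = amode (- int n) (Ycoef h 0 s) k z" using assms(4) by simp
  finally show ?thesis unfolding NOcoef_def by simp
qed

lemma mem_size_pos: "x \<in># M \<Longrightarrow> size M > 0"
  by (induction M) auto

lemma lval_remove_fst: "n \<in># fst k \<Longrightarrow> lval (fst k - {#n#}, snd k) = lval k - 1"
  by (cases k) (auto simp: lval_def size_Diff_submset dest!: mem_size_pos)

lemma lval_remove_snd: "n \<in># snd k \<Longrightarrow> lval (fst k, snd k - {#n#}) = lval k + 1"
  by (cases k) (auto simp: lval_def size_Diff_submset dest!: mem_size_pos)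

lemma Atr_val:
  assumes "okW W s" "bnd L s" "L + 1 \<le> lval k" "n > 0" "0 < Im z"
  shows "Atr (a,b,c,d) n s k z =
    (if n \<in># fst k then (of_real c * z + of_real d)^2 * s (fst k - {#n#}, snd k) z else 0)"
proof -
  let ?h = "\<lambda>\<tau>. (of_real c * \<tau> + of_real d)^2"
  have "bnd (L - 1) (bmode (- int n) s)" by (rule bnd_bmode[OF assms(2)]) (use assms(4) in simp)
  then have b0: "bmode (- int n) s k z = 0" by (rule bnd_zero) (use assms(3) in simp)
  have fin: "finite (supp (Ycoef ?h 0 s))" by (rule okW_finite[OF okW_Ycoef[OF assms(1)]])
  have "Atr (a,b,c,d) n s k z = NOcoef ?h (int n) s k z"
    unfolding Atr_def using b0 by (simp add: sadd_def smul_def)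
  also have "\<dots> = amode (- int n) (Ycoef ?h 0 s) k z" by (rule NOcoef_val[OF assms(1-4)])
  also have "\<dots> = (if n \<in># fst k then maskH (Ycoef ?h 0 s (fst k - {#n#}, snd k)) z else 0)"
    by (rule amode_neg_val[OF fin assms(4)])
  also have "\<dots> = (if n \<in># fst k then ?h z * s (fst k - {#n#}, snd k) z else 0)"
  proof (cases "n \<in># fst k")
    case True
    have "L \<le> lval (fst k - {#n#}, snd k)" using lval_remove_fst[OF True] assms(3) by simp
    then have "Ycoef ?h 0 s (fst k - {#n#}, snd k) z = ?h z * s (fst k - {#n#}, snd k) z"
      using Ycoef_0_val[OF assms(1,2)] assms(5) by simp
    then show ?thesis using True assms(5) by (simp add: maskH_def)
  qed simp
  finally show ?thesis .
qed

lemma Btr_val: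
  assumes "okW W s" "bnd L s" "L - 1 \<le> lval k" "n > 0" "0 < Im z"
  shows "Btr g n s k z = deriv (mob g) z * (if n \<in># snd k then s (fst k, snd k - {#n#}) z else 0)"
proof -
  have fin: "finite (supp (bmode (- int n) s))" by (rule okW_finite[OF okW_bmode[OF assms(1)]])
  have fin2: "finite (supp s)" by (rule okW_finite[OF assms(1)])
  have "Btr g n s k z = multop (deriv (mob g)) (bmode (- int n) s) k z"
    unfolding Btr_def by (rule Ycoef_n_val[OF assms(1-4)])
  also have "\<dots> = deriv (mob g) z * bmode (- int n) s k z"
    using multop_val[OF fin] assms(5) by simp
  also have "\<dots> = deriv (mob g) z * (if n \<in># snd k then s (fst k, snd k - {#n#}) z else 0)"
    using bmode_neg_val[OF fin2 assms(4)] assms(5) by (simp add: maskH_def)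
  finally show ?thesis .
qed


lemma mono_val: "0 < Im z \<Longrightarrow> mono k0 F k z = (if k = k0 then F z else 0)"
  by (simp add: mono_def maskH_def)

lemma okW_mono0: "okW 0 (mono ({#},{#}) F)"
  unfolding okW_def by (auto simp: mono_def nz_def wt_def)

lemma bnd_mono0: "bnd 0 (mono ({#},{#}) F)"
  unfolding bnd_def by (auto simp: mono_def lval_def)

lemma Bchain:
  assumes "\<forall>n\<in>set ms. n > 0"
  shows "okW (int (sum_list ms)) (foldr (Btr g) ms (mono ({#},{#}) F)) \<and>
         bnd (- int (length ms)) (foldr (Btr g) ms (mono ({#},{#}) F)) \<and>
         (\<forall>k z. 0 < Im z \<longrightarrow> - int (length ms) \<le> lval k \<longrightarrow>
            foldr (Btr g) ms (mono ({#},{#}) F) k z =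
              (if k = ({#}, mset ms) then deriv (mob g) z ^ length ms * F z else 0))"
  using assms
proof (induction ms)
  case Nil
  then show ?case using okW_mono0 bnd_mono0 mono_val by simp
next
  case (Cons n ms)
  let ?S = "foldr (Btr g) ms (mono ({#},{#}) F)"
  have IHall: "okW (int (sum_list ms)) ?S \<and> bnd (- int (length ms)) ?S \<and> (\<forall>k z. 0 < Im z \<longrightarrow> - int (length ms) \<le> lval k \<longrightarrow>
       ?S k z = (if k = ({#}, mset ms) then deriv (mob g) z ^ length ms * F z else 0))"
    using Cons.IH Cons.prems by simp
  then have IH: "okW (int (sum_list ms)) ?S" "bnd (- int (length ms)) ?S"
    "\<And>k z. 0 < Im z \<Longrightarrow> - int (length ms) \<le> lval k \<Longrightarrow>
       ?S k z = (if k = ({#}, mset ms) then deriv (mob g) z ^ length ms * F z else 0)" by blast+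
  have n: "n > 0" using Cons.prems by simp
  have o: "okW (int (sum_list (n # ms))) (Btr g n ?S)"
    using okW_Btr[OF IH(1), of n g] by (simp add: add.commute)
  have e: "- int (length (n # ms)) = - int (length ms) - 1" by simp
  have b: "bnd (- int (length (n # ms))) (Btr g n ?S)"
    unfolding e by (rule bnd_Btr[OF IH(2) n])
  have v: "Btr g n ?S k z = (if k = ({#}, mset (n # ms)) then deriv (mob g) z ^ length (n # ms) * F z else 0)"
    if z: "0 < Im z" and lk: "- int (length (n # ms)) \<le> lval k" for k z
  proof -
    have "Btr g n ?S k z = deriv (mob g) z * (if n \<in># snd k then ?S (fst k, snd k - {#n#}) z else 0)"
      by (rule Btr_val[OF IH(1,2) _ n z]) (use lk in simp)
    also have "\<dots> = deriv (mob g) z * (if n \<in># snd k \<and> (fst k, snd k - {#n#}) = ({#}, mset ms)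
        then deriv (mob g) z ^ length ms * F z else 0)"
    proof (cases "n \<in># snd k")
      case True
      have "- int (length ms) \<le> lval (fst k, snd k - {#n#})" using lval_remove_snd[OF True] lk by simp
      then show ?thesis using IH(3)[OF z] True by simp
    qed simp
    also have "(n \<in># snd k \<and> (fst k, snd k - {#n#}) = ({#}, mset ms)) = (k = ({#}, mset (n # ms)))"
    proof
      assume h: "n \<in># snd k \<and> (fst k, snd k - {#n#}) = ({#}, mset ms)"
      then have mem: "n \<in># snd k" and eq: "snd k - {#n#} = mset ms" and f: "fst k = {#}" by auto
      have "add_mset n (snd k - {#n#}) = snd k" by (rule insert_DiffM[OF mem])
      then have "add_mset n (mset ms) = snd k" unfolding eq .
      then show "k = ({#}, mset (n # ms))" using f by (cases k) auto
    next
      assume "k = ({#}, mset (n # ms))"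
      then show "n \<in># snd k \<and> (fst k, snd k - {#n#}) = ({#}, mset ms)" by simp
    qed
    finally show ?thesis by simp
  qed
  have eq: "foldr (Btr g) (n # ms) (mono ({#},{#}) F) = Btr g n ?S" by simp
  show ?case unfolding eq using o b v by blast
qed

lemma Achain:
  assumes "\<forall>n\<in>set ls. n > 0" "okW W S" "bnd L S"
    "\<And>k z. 0 < Im z \<Longrightarrow> L \<le> lval k \<Longrightarrow> S k z = (if k = (l0, m0) then V z else 0)"
  shows "okW (W + int (sum_list ls)) (foldr (Atr (a,b,c,d)) ls S) \<and>
         bnd (L + int (length ls)) (foldr (Atr (a,b,c,d)) ls S) \<and>
         (\<forall>k z. 0 < Im z \<longrightarrow> L + int (length ls) \<le> lval k \<longrightarrow>
            foldr (Atr (a,b,c,d)) ls S k z =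
              (if k = (l0 + mset ls, m0) then ((of_real c * z + of_real d)^2) ^ length ls * V z else 0))"
  using assms(1)
proof (induction ls)
  case Nil
  then show ?case using assms(2-4) by simp
next
  case (Cons n ls)
  let ?S = "foldr (Atr (a,b,c,d)) ls S"
  let ?H = "\<lambda>z. (of_real c * z + of_real d)^2"
  have IHall: "okW (W + int (sum_list ls)) ?S \<and> bnd (L + int (length ls)) ?S \<and> (\<forall>k z. 0 < Im z \<longrightarrow> L + int (length ls) \<le> lval k \<longrightarrow>
       ?S k z = (if k = (l0 + mset ls, m0) then ?H z ^ length ls * V z else 0))"
    using Cons.IH Cons.prems by simp
  then have IH: "okW (W + int (sum_list ls)) ?S" "bnd (L + int (length ls)) ?S"
    "\<And>k z. 0 < Im z \<Longrightarrow> L + int (length ls) \<le> lval k \<Longrightarrow>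
       ?S k z = (if k = (l0 + mset ls, m0) then ?H z ^ length ls * V z else 0)" by blast+
  have n: "n > 0" using Cons.prems by simp
  have o: "okW (W + int (sum_list (n # ls))) (Atr (a,b,c,d) n ?S)"
    using okW_Atr[OF IH(1), where n=n and g="(a,b,c,d)"] by (simp add: algebra_simps)
  have e: "L + int (length (n # ls)) = L + int (length ls) + 1" by simp
  have b: "bnd (L + int (length (n # ls))) (Atr (a,b,c,d) n ?S)"
    unfolding e by (rule bnd_Atr[OF IH(2) n])
  have v: "Atr (a,b,c,d) n ?S k z = (if k = (l0 + mset (n # ls), m0) then ?H z ^ length (n # ls) * V z else 0)"
    if z: "0 < Im z" and lk: "L + int (length (n # ls)) \<le> lval k" for k z
  proof -
    have "Atr (a,b,c,d) n ?S k z = (if n \<in># fst k then ?H z * ?S (fst k - {#n#}, snd k) z else 0)"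
      by (rule Atr_val[OF IH(1,2) _ n z]) (use lk in simp)
    also have "\<dots> = (if n \<in># fst k \<and> (fst k - {#n#}, snd k) = (l0 + mset ls, m0)
        then ?H z * (?H z ^ length ls * V z) else 0)"
    proof (cases "n \<in># fst k")
      case True
      have "L + int (length ls) \<le> lval (fst k - {#n#}, snd k)" using lval_remove_fst[OF True] lk by simp
      then show ?thesis using IH(3)[OF z] True by simp
    qed simp
    also have "(n \<in># fst k \<and> (fst k - {#n#}, snd k) = (l0 + mset ls, m0)) = (k = (l0 + mset (n # ls), m0))"
    proof
      assume h: "n \<in># fst k \<and> (fst k - {#n#}, snd k) = (l0 + mset ls, m0)"
      then have mem: "n \<in># fst k" and eq: "fst k - {#n#} = l0 + mset ls" and f: "snd k = m0" by auto
      have "add_mset n (fst k - {#n#}) = fst k" by (rule insert_DiffM[OF mem])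
      then have "add_mset n (l0 + mset ls) = fst k" unfolding eq .
      then show "k = (l0 + mset (n # ls), m0)" using f by (cases k) auto
    next
      assume "k = (l0 + mset (n # ls), m0)"
      then show "n \<in># fst k \<and> (fst k - {#n#}, snd k) = (l0 + mset ls, m0)" by simp
    qed
    finally show ?thesis by simp
  qed
  have eq: "foldr (Atr (a,b,c,d)) (n # ls) S = Atr (a,b,c,d) n ?S" by simp
  show ?case unfolding eq using o b v by blast
qed

lemma pi_m_val:
  assumes "nz (l, m)" "0 < Im z" "lval (l, m) \<le> lval k"
  shows "pi_m (a,b,c,d) (l, m) f k z =
    (if k = (l, m) then ((of_real c * z + of_real d)^2) ^ size l * deriv (mob (a,b,c,d)) z ^ size m * f (mob (a,b,c,d) z) else 0)"
proof -
  let ?g = "(a,b,c,d)"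
  let ?ms = "sorted_list_of_multiset m" and ?ls = "sorted_list_of_multiset l"
  have pm: "\<forall>n\<in>set ?ms. n > 0" and pl: "\<forall>n\<in>set ?ls. n > 0" using assms(1) by (auto simp: nz_def intro: gr0I)
  have lm: "length ?ms = size m" "length ?ls = size l"
    using size_mset[of ?ms] size_mset[of ?ls] by simp_all
  note B = Bchain[OF pm, of ?g "f \<circ> mob ?g"]
  let ?S = "foldr (Btr ?g) ?ms (mono ({#},{#}) (f \<circ> mob ?g))"
  have Bv: "\<And>k z. 0 < Im z \<Longrightarrow> - int (length ?ms) \<le> lval k \<Longrightarrow>
      ?S k z = (if k = ({#}, m) then deriv (mob ?g) z ^ size m * f (mob ?g z) else 0)"
  proof -
    fix k z assume "0 < Im z" "- int (length ?ms) \<le> lval k"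
    then have "?S k z = (if k = ({#}, mset ?ms) then deriv (mob ?g) z ^ length ?ms * (f \<circ> mob ?g) z else 0)"
      using conjunct2[OF conjunct2[OF B]] by blast
    then show "?S k z = (if k = ({#}, m) then deriv (mob ?g) z ^ size m * f (mob ?g z) else 0)"
      using lm by simp
  qed
  note A = Achain[OF pl conjunct1[OF B] conjunct1[OF conjunct2[OF B]] Bv, of a b c d]
  have "- int (length ?ms) + int (length ?ls) \<le> lval k" using assms(3) lm by (simp add: lval_def)
  then have "foldr (Atr ?g) ?ls ?S k z = (if k = ({#} + mset ?ls, m) then ((of_real c * z + of_real d)^2) ^ length ?ls *
      (deriv (mob ?g) z ^ size m * f (mob ?g z)) else 0)"
    using A assms(2) by blast
  then show ?thesis unfolding pi_m_def using lm by (simp add: mult.assoc)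
qed


lemma piact_lead:
  assumes "v \<in> Dch" "\<forall>k\<in>supp v. lval k \<le> lval k0" "0 < Im z"
  shows "piact (a,b,c,d) v k0 z = ((of_real c * z + of_real d)^2) ^ size (fst k0) *
     deriv (mob (a,b,c,d)) z ^ size (snd k0) * v k0 (mob (a,b,c,d) z)"
proof -
  let ?X = "\<lambda>k. ((of_real c * z + of_real d)^2) ^ size (fst k) *
     deriv (mob (a,b,c,d)) z ^ size (snd k) * v k (mob (a,b,c,d) z)"
  have fin: "finite (supp v)" using assms(1) by (simp add: Dch_def)
  have "piact (a,b,c,d) v k0 z = (\<Sum>k\<in>supp v. if k0 = k then ?X k else 0)"
    unfolding piact_def lift_val
  proof (intro sum.cong refl)
    fix k assume k: "k \<in> supp v"
    obtain l m where lm: "k = (l, m)" by (cases k)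
    have "nz (l, m)" using assms(1) k lm by (auto simp: Dch_def nz_def)
    moreover have "lval (l, m) \<le> lval k0" using assms(2) k lm by auto
    ultimately show "pi_m (a,b,c,d) k (v k) k0 z = (if k0 = k then ?X k else 0)"
      using pi_m_val[of l m z k0 a b c d "v k"] assms(3) lm by simp
  qed
  also have "\<dots> = (if k0 \<in> supp v then ?X k0 else 0)" using fin by simp
  also have "\<dots> = ?X k0" using not_supp[of k0 v] by auto
  finally show ?thesis .
qed

lemma mob_denom_nz:
  assumes "a * d - b * c = (1::real)" "0 < Im z"
  shows "of_real c * z + of_real d \<noteq> 0"
proof
  assume h: "of_real c * z + of_real d = 0"
  then have "Im (of_real c * z + of_real d) = 0" by simp
  then have "c * Im z = 0" by simp
  then have c0: "c = 0" using assms(2) by simp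
  then have "d = 0" using h by simp
  then show False using assms(1) c0 by simp
qed

lemma deriv_mob:
  assumes "a * d - b * c = (1::real)" "of_real c * z + of_real d \<noteq> 0"
  shows "deriv (mob (a,b,c,d)) z = 1 / (of_real c * z + of_real d)^2"
proof -
  have m: "mob (a,b,c,d) = (\<lambda>\<tau>. (of_real a * \<tau> + of_real b) / (of_real c * \<tau> + of_real d))"
    by (simp add: mob_def fun_eq_iff)
  have "((\<lambda>\<tau>. (of_real a * \<tau> + of_real b) / (of_real c * \<tau> + of_real d)) has_field_derivative
     ((of_real a * (of_real c * z + of_real d) - (of_real a * z + of_real b) * of_real c) / (of_real c * z + of_real d)^2)) (at z)"
    using assms(2) by (auto intro!: derivative_eq_intros simp: power2_eq_square)
  moreover have "(of_real a * (of_real c * z + of_real d) - (of_real a * z + of_real b) * of_real c) = (of_real (a * d - b * c) :: complex)"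
    by (simp add: algebra_simps)
  ultimately have "((\<lambda>\<tau>. (of_real a * \<tau> + of_real b) / (of_real c * \<tau> + of_real d)) has_field_derivative
     (1 / (of_real c * z + of_real d)^2)) (at z)" using assms(1) by simp
  then show ?thesis unfolding m by (rule DERIV_imp_deriv)
qed

lemma powi_combine:
  assumes "(w::complex) \<noteq> 0"
  shows "(w^2) ^ p * (1 / w^2) ^ q = w powi (2 * (int p - int q))"
proof -
  have "w powi (2 * (int p - int q)) = w powi (int (2*p)) * w powi (- int (2*q))"
    using assms by (simp add: power_int_add[symmetric] algebra_simps)
  also have "\<dots> = w ^ (2*p) * inverse (w ^ (2*q))"
    by (simp only: power_int_minus power_int_of_nat)
  also have "\<dots> = (w^2) ^ p * (1 / w^2) ^ q"
    by (simp add: power_mult power_one_over divide_inverse power_inverse)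
  finally show ?thesis by simp
qed

lemma piact_slash:
  assumes "g \<in> SL2Z" "v \<in> Dch" "\<forall>k\<in>supp v. lval k \<le> lval k0" "0 < Im z"
  shows "piact (of_intm g) v k0 z = slash (2 * (int (size (snd k0)) - int (size (fst k0)))) g (v k0) z"
proof -
  obtain a b c d where g: "g = (a,b,c,d)" by (cases g) auto
  have det: "real_of_int a * real_of_int d - real_of_int b * real_of_int c = 1"
    using assms(1) g unfolding SL2Z_def by (simp flip: of_int_mult of_int_diff)
  let ?w = "of_real (real_of_int c) * z + of_real (real_of_int d)"
  have w: "?w \<noteq> 0" by (rule mob_denom_nz[OF det assms(4)])
  have "piact (of_intm g) v k0 z = (?w^2) ^ size (fst k0) * (1 / ?w^2) ^ size (snd k0) * v k0 (mob (of_intm g) z)"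
    using piact_lead[OF assms(2,3,4)] deriv_mob[OF det w] by (simp add: g of_intm_def)
  also have "\<dots> = ?w powi (2 * (int (size (fst k0)) - int (size (snd k0)))) * v k0 (mob (of_intm g) z)"
    using powi_combine[OF w] by simp
  also have "\<dots> = slash (2 * (int (size (snd k0)) - int (size (fst k0)))) g (v k0) z"
    by (simp add: slash_def g algebra_simps)
  finally show ?thesis .
qed


lemma holo_sums:
  fixes N :: nat and u :: "int \<Rightarrow> complex"
  assumes "\<forall>m<0. u m = 0"
    "((\<lambda>m. u m * exp (2 * of_real pi * \<i> * of_int m * \<tau> / of_nat N)) has_sum F) UNIV"
  shows "(\<lambda>n. u (int n) * exp (2 * of_real pi * \<i> * \<tau> / of_nat N) ^ n) sums F"
proof -
  let ?g = "\<lambda>m. u m * exp (2 * of_real pi * \<i> * of_int m * \<tau> / of_nat N)"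
  have "(?g has_sum F) (range int)"
  proof -
    have "(?g has_sum F) UNIV \<longleftrightarrow> (?g has_sum F) (range int)"
    proof (rule has_sum_cong_neutral)
      fix x assume "x \<in> UNIV - range int"
      then have "x < 0" by (metis Diff_iff nonneg_int_cases not_less rangeI)
      then show "?g x = 0" using assms(1) by simp
    qed auto
    then show ?thesis using assms(2) by simp
  qed
  then have "((?g \<circ> int) has_sum F) UNIV" by (simp add: has_sum_reindex)
  then have "(?g \<circ> int) sums F" by (rule has_sum_imp_sums)
  moreover have "(?g \<circ> int) = (\<lambda>n. u (int n) * exp (2 * of_real pi * \<i> * \<tau> / of_nat N) ^ n)"
  proof
    fix n :: nat
    have "2 * of_real pi * \<i> * of_int (int n) * \<tau> / of_nat N = of_nat n * (2 * of_real pi * \<i> * \<tau> / of_nat N)"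
      by simp
    then show "(?g \<circ> int) n = u (int n) * exp (2 * of_real pi * \<i> * \<tau> / of_nat N) ^ n"
      by (simp only: o_def exp_of_nat_mult)
  qed
  ultimately show ?thesis by simp
qed

lemma fourier_zero:
  fixes f :: "complex \<Rightarrow> complex" and e :: nat
  assumes "holo_at_inf f" "0 < e" "\<And>\<tau>. 0 < Im \<tau> \<Longrightarrow> norm (f \<tau>) \<le> C * Im \<tau> ^ e"
    and t0: "0 < Im \<tau>0"
  shows "f \<tau>0 = 0"
proof -
  from assms(1) obtain N u where N: "N > 0" "\<forall>m<0. u m = 0" "\<forall>\<tau>. Im \<tau> > 0 \<longrightarrow>
      ((\<lambda>m. u m * exp (2 * of_real pi * \<i> * of_int m * \<tau> / of_nat N)) has_sum f \<tau>) UNIV"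
    unfolding holo_at_inf_def by blast
  define a where "a n = u (int n)" for n
  define Q where "Q \<tau> = exp (2 * of_real pi * \<i> * \<tau> / of_nat N)" for \<tau>
  have S: "(\<lambda>n. a n * Q \<tau> ^ n) sums f \<tau>" if "0 < Im \<tau>" for \<tau>
    using holo_sums[OF N(2), of \<tau> N "f \<tau>"] N(3) that unfolding a_def Q_def by blast
  have nQ: "norm (Q \<tau>) = exp (- 2 * pi * Im \<tau> / N)" for \<tau>
    unfolding Q_def by simp
  have conv: "conv_radius a \<ge> 1"
  proof (rule conv_radius_geI_ex')
    fix r :: real assume r: "0 < r" "ereal r < 1"
    define y where "y = real N * (- ln r) / (2 * pi)"
    have "r < 1" using r by simp
    then have "ln r < 0" using r by simp
    then have y: "0 < y" unfolding y_def using N(1) by (intro divide_pos_pos mult_pos_pos) auto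
    have "Q (\<i> * of_real y) = exp (of_real (- 2 * pi * y / N))"
      unfolding Q_def by (simp add: field_simps)
    also have "- 2 * pi * y / N = ln r" unfolding y_def using N(1) by (simp add: field_simps)
    also have "exp (of_real (ln r)) = (of_real r :: complex)" unfolding exp_of_real using r by simp
    finally have "Q (\<i> * of_real y) = of_real r" .
    then show "summable (\<lambda>n. a n * of_real r ^ n)"
      using S[of "\<i> * of_real y"] y by (auto simp: sums_iff)
  qed
  define G where "G = eval_fps (Abs_fps a)"
  have Gv: "G (Q \<tau>) = f \<tau>" if "0 < Im \<tau>" for \<tau>
    using S[OF that] unfolding G_def eval_fps_def by (simp add: sums_iff)
  have sub: "ball (0::complex) 1 \<subseteq> eball 0 (fps_conv_radius (Abs_fps a))"
  proof (rule subsetI)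
    fix z :: complex assume "z \<in> ball 0 1"
    then have "ereal (dist 0 z) < 1" by simp
    then have "ereal (dist 0 z) < conv_radius a" using conv by (rule less_le_trans)
    then show "z \<in> eball 0 (fps_conv_radius (Abs_fps a))" by (simp add: fps_conv_radius_def)
  qed
  have holG: "G holomorphic_on ball 0 1"
    unfolding G_def by (rule holomorphic_on_eval_fps[OF sub])
  have "norm (f \<tau>0) \<le> \<epsilon>" if eps: "\<epsilon> > 0" for \<epsilon>
  proof -
    define y where "y = min (Im \<tau>0 / 2) (min 1 (\<epsilon> / (\<bar>C\<bar> + 1)))"
    have y1: "y \<le> Im \<tau>0 / 2" "y \<le> 1" "y \<le> \<epsilon> / (\<bar>C\<bar> + 1)" unfolding y_def
      by (rule min.cobounded1, rule order_trans[OF min.cobounded2 min.cobounded1],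
          rule order_trans[OF min.cobounded2 min.cobounded2])
    have y0: "0 < y" unfolding y_def using t0 eps by auto
    have y: "0 < y" "y < Im \<tau>0" "y \<le> 1" "y \<le> \<epsilon> / (\<bar>C\<bar> + 1)"
      using y0 y1 t0 by auto
    have Cy: "C * y ^ e \<le> \<epsilon>"
    proof -
      have "y ^ e \<le> y" using y assms(2) by (simp add: power_le_one_iff power_decreasing[of 1 e y, simplified])
      then have "C * y ^ e \<le> \<bar>C\<bar> * y"
        by (smt (verit, best) mult_left_mono mult_nonneg_nonneg y(1) zero_le_power abs_ge_self abs_ge_zero mult_right_mono)
      also have "\<dots> \<le> \<bar>C\<bar> * (\<epsilon> / (\<bar>C\<bar> + 1))" using y(4) by (rule mult_left_mono) simp
      also have "\<dots> \<le> \<epsilon>" using eps by (simp add: field_simps)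
      finally show ?thesis .
    qed
    define r where "r = exp (- 2 * pi * y / N)"
    have r: "0 < r" "r < 1" unfolding r_def using y N(1) by auto
    have q0: "norm (Q \<tau>0) < r" unfolding nQ r_def using y N(1) t0
      by (simp add: divide_strict_right_mono)
    have "norm (G (Q \<tau>0)) \<le> \<epsilon>"
    proof (rule maximum_modulus_frontier[of G "cball 0 r"])
      show "G holomorphic_on interior (cball 0 r)"
        using holG r by (auto intro: holomorphic_on_subset)
      show "continuous_on (closure (cball 0 r)) G"
        using holomorphic_on_imp_continuous_on[OF holG] r
        by (auto intro: continuous_on_subset)
      show "bounded (cball (0::complex) r)" by simp
      show "Q \<tau>0 \<in> cball 0 r" using q0 by simp
    next
      fix z :: complex assume "z \<in> frontier (cball 0 r)"
      then have z: "norm z = r" using r by simp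
      then have z0: "z \<noteq> 0" using r by auto
      define \<tau> where "\<tau> = of_nat N * Ln z / (2 * of_real pi * \<i>)"
      have "Q \<tau> = exp (Ln z)" unfolding Q_def \<tau>_def using N(1) by (simp add: field_simps)
      then have Qz: "Q \<tau> = z" using z0 by simp
      have "\<tau> = - \<i> * (of_real (real N / (2 * pi)) * Ln z)" unfolding \<tau>_def
        by (simp add: field_simps)
      then have "Im \<tau> = - (real N / (2 * pi)) * Re (Ln z)" by simp
      then have "Im \<tau> = - real N * Re (Ln z) / (2 * pi)" by simp
      also have "Re (Ln z) = ln r" using z z0 by simp
      also have "ln r = - 2 * pi * y / N" unfolding r_def by simp
      finally have It: "Im \<tau> = y" using N(1) by (simp add: field_simps)
      have "norm (G z) = norm (f \<tau>)" using Gv[of \<tau>] It y Qz by simp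
      also have "\<dots> \<le> C * Im \<tau> ^ e" using assms(3)[of \<tau>] It y(1) by simp
      finally show "norm (G z) \<le> \<epsilon>" using Cy It by simp
    qed
    then show ?thesis using Gv[OF t0] by simp
  qed
  then have "norm (f \<tau>0) = 0"
    by (metis dual_order.antisym norm_ge_zero field_lbound_gt_zero less_le_not_le zero_less_norm_iff)
  then show ?thesis by simp
qed


definition jf :: "imat \<Rightarrow> complex \<Rightarrow> complex" where
  "jf g \<tau> = (case g of (a,b,c,d) \<Rightarrow> of_int c * \<tau> + of_int d)"

lemma SL2Z_det: "(a,b,c,d) \<in> SL2Z \<longleftrightarrow> a*d - b*c = 1" by (simp add: SL2Z_def)

lemma SL2Z_real_det: "(a,b,c,d) \<in> SL2Z \<Longrightarrow> real_of_int a * real_of_int d - real_of_int b * real_of_int c = 1"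
  unfolding SL2Z_det by (simp flip: of_int_mult of_int_diff)

lemma jf_nz:
  assumes "g \<in> SL2Z" "0 < Im \<tau>" shows "jf g \<tau> \<noteq> 0"
proof
  obtain a b c d where g: "g = (a,b,c,d)" by (cases g) auto
  assume h: "jf g \<tau> = 0"
  then have "Im (jf g \<tau>) = 0" by simp
  then have "c = 0" using assms(2) by (simp add: jf_def g)
  moreover then have "d = 0" using h by (simp add: jf_def g)
  ultimately show False using assms(1) g by (simp add: SL2Z_det)
qed

lemma mob_intm: "mob (of_intm g) \<tau> = (case g of (a,b,c,d) \<Rightarrow> (of_int a * \<tau> + of_int b)) / jf g \<tau>"
  by (cases g) (simp add: mob_def of_intm_def jf_def)

lemma Im_mob:
  assumes "g \<in> SL2Z" "0 < Im \<tau>"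
  shows "Im (mob (of_intm g) \<tau>) = Im \<tau> / (cmod (jf g \<tau>))^2"
proof -
  obtain a b c d where g: "g = (a,b,c,d)" by (cases g) auto
  have det: "real_of_int a * real_of_int d - real_of_int b * real_of_int c = 1"
    using assms(1) g by (simp add: SL2Z_real_det)
  let ?x = "Re \<tau>" and ?y = "Im \<tau>"
  have "Im (mob (of_intm g) \<tau>) = (a * ?y * (c * ?x + d) - (a * ?x + b) * (c * ?y)) / (cmod (jf g \<tau>))^2"
    by (simp add: mob_intm g jf_def Im_divide cmod_power2 algebra_simps)
  also have "a * ?y * (c * ?x + d) - (a * ?x + b) * (c * ?y) = (a * d - b * c) * ?y"
    by (simp add: algebra_simps)
  finally show ?thesis using det by simp
qed

lemma Im_mob_pos: "g \<in> SL2Z \<Longrightarrow> 0 < Im \<tau> \<Longrightarrow> 0 < Im (mob (of_intm g) \<tau>)"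
  using Im_mob jf_nz by (simp add: divide_pos_pos)

lemma mmul_SL2Z: assumes "g \<in> SL2Z" "h \<in> SL2Z" shows "mmul g h \<in> SL2Z"
proof -
  obtain a b c d where g: "g = (a,b,c,d)" by (cases g) auto
  obtain a' b' c' d' where h: "h = (a',b',c',d')" by (cases h) auto
  have "(a*a' + b*c') * (c*b' + d*d') - (a*b' + b*d') * (c*a' + d*c') = (a*d - b*c) * (a'*d' - b'*c')"
    by (simp add: algebra_simps)
  then show ?thesis using assms by (simp add: g h SL2Z_det mmul_def)
qed

lemma minv_SL2Z: assumes "g \<in> SL2Z" shows "minv g \<in> SL2Z"
proof -
  obtain a b c d where g: "g = (a,b,c,d)" by (cases g) auto
  then show ?thesis using assms by (simp add: SL2Z_det minv_def algebra_simps)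
qed


lemma frac_lemma:
  fixes X Y :: complex
  assumes "Y \<noteq> 0"
  shows "(a * (X / Y) + b) / (c * (X / Y) + d) = (a * X + b * Y) / (c * X + d * Y)"
proof -
  have 1: "a * (X / Y) + b = (a * X + b * Y) / Y" using assms by (simp add: field_simps)
  have 2: "c * (X / Y) + d = (c * X + d * Y) / Y" using assms by (simp add: field_simps)
  show ?thesis unfolding 1 2 using assms by simp
qed

lemma mob_mmul:
  assumes "g \<in> SL2Z" "h \<in> SL2Z" "0 < Im \<tau>"
  shows "mob (of_intm (mmul g h)) \<tau> = mob (of_intm g) (mob (of_intm h) \<tau>)"
proof -
  obtain a b c d where g: "g = (a,b,c,d)" by (cases g) auto
  obtain a' b' c' d' where h: "h = (a',b',c',d')" by (cases h) auto
  define X where "X = of_int a' * \<tau> + of_int b'"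
  define Y where "Y = of_int c' * \<tau> + of_int d'"
  have j1: "Y \<noteq> 0" using jf_nz[OF assms(2,3)] by (simp add: h jf_def Y_def)
  have e: "mob (of_intm h) \<tau> = X / Y"
    by (simp add: mob_intm h jf_def X_def Y_def)
  have "mob (of_intm g) (mob (of_intm h) \<tau>) = (of_int a * (X / Y) + of_int b) / (of_int c * (X / Y) + of_int d)"
    unfolding e by (simp add: mob_intm g jf_def)
  also have "\<dots> = (of_int a * X + of_int b * Y) / (of_int c * X + of_int d * Y)"
    by (rule frac_lemma[OF j1])
  also have "of_int a * X + of_int b * Y = of_int (a*a' + b*c') * \<tau> + of_int (a*b' + b*d')"
    unfolding X_def Y_def by (simp add: algebra_simps)
  also have "of_int c * X + of_int d * Y = of_int (c*a' + d*c') * \<tau> + of_int (c*b' + d*d')"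
    unfolding X_def Y_def by (simp add: algebra_simps)
  finally show ?thesis by (simp add: mob_intm g h mmul_def jf_def)
qed


lemma mob_minv:
  assumes "g \<in> SL2Z" "0 < Im \<tau>"
  shows "mob (of_intm (minv g)) (mob (of_intm g) \<tau>) = \<tau>"
proof -
  obtain a b c d where g: "g = (a,b,c,d)" by (cases g) auto
  have "a * d - b * c = 1" using assms(1) g by (simp add: SL2Z_det)
  then have "(of_int (a * d - b * c) :: complex) = 1" by simp
  then have det: "of_int a * of_int d - of_int b * of_int c = (1::complex)" by simp
  define X where "X = of_int a * \<tau> + of_int b"
  define Y where "Y = of_int c * \<tau> + of_int d"
  have j: "Y \<noteq> 0" using jf_nz[OF assms] by (simp add: g jf_def Y_def)
  have e: "mob (of_intm g) \<tau> = X / Y" by (simp add: mob_intm g jf_def X_def Y_def)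
  have "mob (of_intm (minv g)) (X / Y) = (of_int d * (X / Y) + of_int (-b)) / (of_int (-c) * (X / Y) + of_int a)"
    by (simp add: mob_def of_intm_def minv_def g)
  also have "\<dots> = (of_int d * X + of_int (-b) * Y) / (of_int (-c) * X + of_int a * Y)"
    by (rule frac_lemma[OF j])
  also have "of_int d * X + of_int (-b) * Y = (of_int a * of_int d - of_int b * of_int c) * \<tau>"
    unfolding X_def Y_def by (simp add: algebra_simps)
  also have "of_int (-c) * X + of_int a * Y = (of_int a * of_int d - of_int b * of_int c :: complex)"
    unfolding X_def Y_def by (simp add: algebra_simps)
  finally show ?thesis using det e by simp
qed


lemma reduction:
  assumes t: "0 < Im \<tau>"
  shows "\<exists>\<sigma>\<in>SL2Z. 1/2 \<le> Im (mob (of_intm \<sigma>) \<tau>)"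
proof -
  define nrm where "nrm p = cmod (of_int (fst p) * \<tau> + of_int (snd p))" for p :: "int \<times> int"
  define D where "D = {p::int\<times>int. \<exists>a b. a * snd p - b * fst p = 1}"
  define P where "P = {p \<in> D. nrm p \<le> 1}"
  define K where "K = \<lceil>1 / Im \<tau>\<rceil>"
  define K2 where "K2 = \<lceil>1 + real_of_int K * \<bar>Re \<tau>\<bar>\<rceil>"
  have "P \<subseteq> {-K..K} \<times> {-K2..K2}"
  proof
    fix p assume p: "p \<in> P"
    obtain c d where pc: "p = (c, d)" by (cases p)
    have n1: "cmod (of_int c * \<tau> + of_int d) \<le> 1" using p pc by (simp add: P_def nrm_def)
    have "\<bar>Im (of_int c * \<tau> + of_int d)\<bar> \<le> 1" using abs_Im_le_cmod n1 order_trans by blast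
    then have "\<bar>real_of_int c\<bar> * Im \<tau> \<le> 1" using t by (simp add: abs_mult)
    then have "\<bar>real_of_int c\<bar> \<le> 1 / Im \<tau>" using t by (simp add: field_simps)
    also have "\<dots> \<le> real_of_int K" unfolding K_def by simp
    finally have cK: "\<bar>real_of_int c\<bar> \<le> real_of_int K" .
    then have c: "\<bar>c\<bar> \<le> K" by linarith
    have "\<bar>Re (of_int c * \<tau> + of_int d)\<bar> \<le> 1" using abs_Re_le_cmod n1 order_trans by blast
    then have "\<bar>real_of_int c * Re \<tau> + real_of_int d\<bar> \<le> 1" by simp
    moreover have "\<bar>real_of_int c * Re \<tau>\<bar> \<le> real_of_int K * \<bar>Re \<tau>\<bar>"
      using cK by (simp add: abs_mult mult_right_mono)
    ultimately have "\<bar>real_of_int d\<bar> \<le> 1 + real_of_int K * \<bar>Re \<tau>\<bar>" by linarith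
    also have "\<dots> \<le> real_of_int K2" unfolding K2_def by simp
    finally have "\<bar>d\<bar> \<le> K2" by linarith
    then show "p \<in> {-K..K} \<times> {-K2..K2}" using c pc by auto
  qed
  then have finP: "finite P" by (rule finite_subset) simp
  have p01: "(0, 1) \<in> P" unfolding P_def D_def nrm_def by (auto intro: exI[of _ 1] exI[of _ 0])
  define m where "m = Min (nrm ` P)"
  have "m \<in> nrm ` P" unfolding m_def using finP p01 by (intro Min_in) auto
  then obtain p0 where p0: "p0 \<in> P" "nrm p0 = m" by auto
  have minP: "\<forall>p\<in>P. m \<le> nrm p" unfolding m_def using finP by auto
  have m1: "m \<le> 1" using p0 P_def by auto
  have minD: "nrm p0 \<le> nrm p" if "p \<in> D" for p
  proof (cases "nrm p \<le> 1")
    case True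
    then have "p \<in> P" using that by (simp add: P_def)
    then have "m \<le> nrm p" using minP by blast
    then show ?thesis using p0(2) by simp
  next
    case False then show ?thesis using m1 p0 by simp
  qed
  obtain c0 d0 where pc0: "p0 = (c0, d0)" by (cases p0)
  from p0(1) obtain a0 b0 where det0: "a0 * d0 - b0 * c0 = 1" unfolding P_def D_def pc0 by auto
  have S0: "(a0, b0, c0, d0) \<in> SL2Z" using det0 by (simp add: SL2Z_det)
  define Y where "Y = of_int c0 * \<tau> + of_int d0"
  have Y: "Y \<noteq> 0" using jf_nz[OF S0 t] by (simp add: jf_def Y_def)
  define t1 where "t1 = (of_int a0 * \<tau> + of_int b0) / Y"
  define n where "n = \<lfloor>Re t1 + 1/2\<rfloor>"
  define \<sigma> where "\<sigma> = (a0 - n * c0, b0 - n * d0, c0, d0)"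
  have "(a0 - n * c0) * d0 - (b0 - n * d0) * c0 = a0 * d0 - b0 * c0" by (simp add: algebra_simps)
  then have S: "\<sigma> \<in> SL2Z" using det0 by (simp add: SL2Z_det \<sigma>_def)
  define t2 where "t2 = mob (of_intm \<sigma>) \<tau>"
  have t2num: "t2 * Y = of_int (a0 - n * c0) * \<tau> + of_int (b0 - n * d0)"
    using Y by (simp add: t2_def mob_intm \<sigma>_def jf_def Y_def)
  have t2t1: "t2 = t1 - of_int n"
  proof -
    have "t2 * Y = (t1 - of_int n) * Y"
      unfolding t2num t1_def using Y by (simp add: field_simps Y_def)
    then show ?thesis using Y by simp
  qed
  have "Re t2 = Re t1 - n" using t2t1 by simp
  moreover have "real_of_int n \<le> Re t1 + 1/2" "Re t1 + 1/2 < real_of_int n + 1" unfolding n_def by linarith+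
  ultimately have re: "\<bar>Re t2\<bar> \<le> 1/2" by linarith
  have "(- c0) * (b0 - n * d0) - (- d0) * (a0 - n * c0) = a0 * d0 - b0 * c0" by (simp add: algebra_simps)
  then have "(- c0) * snd (a0 - n * c0, b0 - n * d0) - (- d0) * fst (a0 - n * c0, b0 - n * d0) = 1"
    using det0 by simp
  then have "(a0 - n * c0, b0 - n * d0) \<in> D" unfolding D_def by blast
  then have "nrm p0 \<le> nrm (a0 - n * c0, b0 - n * d0)" by (rule minD)
  moreover have "nrm (a0 - n * c0, b0 - n * d0) = cmod t2 * cmod Y"
    unfolding nrm_def fst_conv snd_conv t2num[symmetric] by (simp add: norm_mult)
  moreover have "nrm p0 = cmod Y" unfolding nrm_def pc0 Y_def by simp
  ultimately have "cmod Y \<le> cmod t2 * cmod Y" by simp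
  then have c1: "1 \<le> cmod t2" using Y by simp
  have ipos: "0 < Im t2" unfolding t2_def by (rule Im_mob_pos[OF S t])
  have "1 \<le> (cmod t2)^2" using c1 by (simp add: one_le_power)
  then have "1 \<le> (Re t2)^2 + (Im t2)^2" by (simp add: cmod_power2)
  moreover have "(Re t2)^2 \<le> 1/4"
  proof -
    have "(Re t2)^2 = \<bar>Re t2\<bar>^2" by simp
    also have "\<dots> \<le> (1/2)^2" by (rule power_mono[OF re]) simp
    finally show ?thesis by (simp add: power2_eq_square)
  qed
  ultimately have i34: "3/4 \<le> (Im t2)^2" by simp
  have "1/2 \<le> Im t2"
  proof (rule ccontr)
    assume "\<not> 1/2 \<le> Im t2"
    then have "Im t2 < 1/2" by simp
    then have "(Im t2)^2 < (1/2)^2" by (rule power_strict_mono) (use ipos in auto)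
    then show False using i34 by (simp add: power2_eq_square)
  qed
  then show ?thesis using S unfolding t2_def by blast
qed


lemma Re_expo: "Re (2 * of_real pi * \<i> * of_int m * \<tau> / of_nat N) = - 2 * pi * real_of_int m * Im \<tau> / real N"
  by (simp add: Re_divide_of_nat)

lemma holo_bound:
  assumes "holo_at_inf F"
  shows "\<exists>B. \<forall>\<tau>. 1/2 \<le> Im \<tau> \<longrightarrow> norm (F \<tau>) \<le> B"
proof -
  from assms obtain N u where N: "N > 0" "\<forall>m<0. u m = 0" "\<forall>\<tau>. Im \<tau> > 0 \<longrightarrow>
      ((\<lambda>m. u m * exp (2 * of_real pi * \<i> * of_int m * \<tau> / of_nat N)) has_sum F \<tau>) UNIV"
    unfolding holo_at_inf_def by blast
  define g where "g m = u m * exp (2 * of_real pi * \<i> * of_int m * (\<i> / 2) / of_nat N)" for m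
  have h: "0 < Im (\<i> / 2 :: complex)" by simp
  have "(g has_sum F (\<i> / 2)) UNIV" unfolding g_def using N(3) h by blast
  then have "g summable_on UNIV" by (auto simp: summable_on_def)
  then have "(\<lambda>m. norm (g m)) summable_on UNIV" by (simp add: summable_on_iff_abs_summable_on_complex)
  then have hs: "((\<lambda>m. norm (g m)) has_sum infsum (\<lambda>m. norm (g m)) UNIV) UNIV" by simp
  have "norm (F \<tau>) \<le> infsum (\<lambda>m. norm (g m)) UNIV" if t: "1/2 \<le> Im \<tau>" for \<tau>
  proof (rule norm_infsum_le[OF _ hs])
    show "((\<lambda>m. u m * exp (2 * of_real pi * \<i> * of_int m * \<tau> / of_nat N)) has_sum F \<tau>) UNIV"
      using N(3) t by simp
  next
    fix m :: int
    show "norm (u m * exp (2 * of_real pi * \<i> * of_int m * \<tau> / of_nat N)) \<le> norm (g m)"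
    proof (cases "m < 0")
      case True then show ?thesis using N(2) by (simp add: g_def)
    next
      case False
      have mm: "real_of_int m * (1/2) \<le> real_of_int m * Im \<tau>" using False t by (intro mult_left_mono) auto
      have neg: "- 2 * pi / real N \<le> 0" using N(1) by simp
      have "(- 2 * pi / real N) * (real_of_int m * Im \<tau>) \<le> (- 2 * pi / real N) * (real_of_int m * (1/2))"
        by (rule mult_left_mono_neg[OF mm neg])
      then have "- 2 * pi * real_of_int m * Im \<tau> / real N \<le> - 2 * pi * real_of_int m * Im (\<i> / 2) / real N"
        by (simp add: field_simps)
      then have "exp (Re (2 * of_real pi * \<i> * of_int m * \<tau> / of_nat N)) \<le>
                 exp (Re (2 * of_real pi * \<i> * of_int m * (\<i> / 2) / of_nat N))"
        unfolding Re_expo by simp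
      then show ?thesis unfolding g_def norm_mult norm_exp_eq_Re
        by (rule mult_left_mono) simp
    qed
  qed
  then show ?thesis by blast
qed


lemma holo_at_inf_cong:
  assumes "holo_at_inf F" "\<And>\<tau>. 0 < Im \<tau> \<Longrightarrow> F \<tau> = G \<tau>"
  shows "holo_at_inf G"
proof -
  from assms(1) obtain N u where N: "N > 0" "\<forall>\<tau>. Im \<tau> > 0 \<longrightarrow> F (\<tau> + of_nat N) = F \<tau>"
    "\<forall>m<0. u m = 0" "\<forall>\<tau>. Im \<tau> > 0 \<longrightarrow>
      ((\<lambda>m. u m * exp (2 * of_real pi * \<i> * of_int m * \<tau> / of_nat N)) has_sum F \<tau>) UNIV"
    unfolding holo_at_inf_def by blast
  have "\<forall>\<tau>. Im \<tau> > 0 \<longrightarrow> G (\<tau> + of_nat N) = G \<tau>"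
  proof (intro allI impI)
    fix \<tau> :: complex assume t: "Im \<tau> > 0"
    then have "Im (\<tau> + of_nat N) > 0" by simp
    then show "G (\<tau> + of_nat N) = G \<tau>" using assms(2) t N(2) by metis
  qed
  moreover have "\<forall>\<tau>. Im \<tau> > 0 \<longrightarrow>
      ((\<lambda>m. u m * exp (2 * of_real pi * \<i> * of_int m * \<tau> / of_nat N)) has_sum G \<tau>) UNIV"
    using N(4) assms(2) by metis
  ultimately show ?thesis unfolding holo_at_inf_def using N(1,3) by blast
qed

lemma dvd_of_mod: "(x::int) mod N = y mod N \<Longrightarrow> N dvd (x - y)"
  by (simp add: mod_eq_dvd_iff)

lemma red_principal:
  assumes "(a,b,c,d) \<in> SL2Z" "(a',b',c',d') \<in> SL2Z"
    "a mod N = a' mod N" "b mod N = b' mod N" "c mod N = c' mod N" "d mod N = d' mod N"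
  shows "mmul (a,b,c,d) (minv (a',b',c',d')) \<in> principal_cong N"
proof -
  have det': "a'*d' - b'*c' = 1" using assms(2) by (simp add: SL2Z_det)
  have da: "N dvd (a - a')" and db: "N dvd (b - b')" and dc: "N dvd (c - c')" and dd: "N dvd (d - d')"
    using assms(3-6) by (simp_all add: dvd_of_mod)
  have S: "mmul (a,b,c,d) (minv (a',b',c',d')) \<in> SL2Z"
    by (rule mmul_SL2Z[OF assms(1) minv_SL2Z[OF assms(2)]])
  have e1: "a * d' + b * (- c') - 1 = (a - a') * d' - (b - b') * c'" using det' by (simp add: algebra_simps)
  have e2: "a * (- b') + b * a' = - ((a - a') * b') + (b - b') * a'" by (simp add: algebra_simps)
  have e3: "c * d' + d * (- c') = (c - c') * d' - (d - d') * c'" by (simp add: algebra_simps)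
  have e4: "c * (- b') + d * a' - 1 = - ((c - c') * b') + (d - d') * a'" using det' by (simp add: algebra_simps)
  have "N dvd (a * d' + b * (- c') - 1)" unfolding e1 using da db by simp
  moreover have "N dvd (a * (- b') + b * a')" unfolding e2 using da db by simp
  moreover have "N dvd (c * d' + d * (- c'))" unfolding e3 using dc dd by simp
  moreover have "N dvd (c * (- b') + d * a' - 1)" unfolding e4 using dc dd by simp
  ultimately show ?thesis using S by (simp add: principal_cong_def mmul_def minv_def)
qed

lemma mmul_minv_cancel:
  assumes "(a',b',c',d') \<in> SL2Z"
  shows "mmul (mmul (a,b,c,d) (minv (a',b',c',d'))) (a',b',c',d') = (a,b,c,d)"
proof -
  have det': "a'*d' - b'*c' = 1" using assms by (simp add: SL2Z_det)
  have "(a * d' + b * - c') * a' + (a * - b' + b * a') * c' = a * (a'*d' - b'*c')" by (simp add: algebra_simps)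
  moreover have "(a * d' + b * - c') * b' + (a * - b' + b * a') * d' = b * (a'*d' - b'*c')" by (simp add: algebra_simps)
  moreover have "(c * d' + d * - c') * a' + (c * - b' + d * a') * c' = c * (a'*d' - b'*c')" by (simp add: algebra_simps)
  moreover have "(c * d' + d * - c') * b' + (c * - b' + d * a') * d' = d * (a'*d' - b'*c')" by (simp add: algebra_simps)
  ultimately show ?thesis using det' by (simp add: mmul_def minv_def)
qed


lemma powi_neg2e: "(z::complex) powi (- 2 * int e) = 1 / z ^ (2 * e)"
proof -
  have "z powi (- 2 * int e) = z powi (- int (2 * e))" by simp
  also have "\<dots> = inverse (z ^ (2 * e))" by (simp only: power_int_minus power_int_of_nat)
  finally show ?thesis by (simp add: divide_inverse)
qed

lemma powi_pos2e: "(z::complex) powi (- (- 2 * int e)) = z ^ (2 * e)"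
proof -
  have "z powi (- (- 2 * int e)) = z powi (int (2 * e))" by simp
  also have "\<dots> = z ^ (2 * e)" by (simp only: power_int_of_nat)
  finally show ?thesis .
qed

lemma jf_case: "(case g of (a,b,c,d) \<Rightarrow> (of_int c * \<tau> + of_int d) powi k) = jf g \<tau> powi k"
  by (cases g) (simp add: jf_def)

lemma slash_jf: "slash k g f \<tau> = jf g \<tau> powi (- k) * f (mob (of_intm g) \<tau>)"
  by (cases g) (simp add: slash_def jf_def)

lemma key_bound:
  fixes A Bj fw yt yw yt' S M :: real and e :: nat
  assumes A: "A > 0" and Bj: "Bj > 0" and yw: "yw > 0" and yt': "yt' \<ge> 1/2"
    and nf: "nft = fw / A ^ (2*e)" and it: "yt = yw / A^2"
    and sl: "S = Bj ^ (2*e) * fw" and iw: "yw = yt' / Bj^2" and SM: "S \<le> M" and fw0: "fw \<ge> 0"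
  shows "nft \<le> (2^e * M) * yt ^ e"
proof -
  have yt'0: "yt' > 0" using yt' by simp
  have pe: "\<And>x::real. (x^e)^2 = (x^2)^e" by (simp add: power_mult[symmetric] mult.commute)
  have "nft = (fw / yw ^ e) * yt ^ e"
    using A yw unfolding nf it by (simp add: power_divide power_mult field_simps pe)
  also have "fw / yw ^ e = S / yt' ^ e"
    using Bj yt'0 unfolding sl iw by (simp add: power_divide power_mult field_simps pe)
  also have "S / yt' ^ e \<le> M * 2 ^ e"
  proof -
    have "(1/2) ^ e \<le> yt' ^ e" using yt' by (intro power_mono) auto
    then have "1 \<le> 2 ^ e * yt' ^ e" by (simp add: power_one_over field_simps)
    have "S \<le> M" by (rule SM)
    have "S / yt' ^ e \<le> M / yt' ^ e" using SM yt'0 by (simp add: divide_right_mono)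
    also have "M / yt' ^ e \<le> M * 2 ^ e"
    proof -
      have "S \<ge> 0" unfolding sl using Bj fw0 by simp
      then have M0: "M \<ge> 0" using SM by simp
      have "M * 1 \<le> M * (2 ^ e * yt' ^ e)" by (rule mult_left_mono[OF \<open>1 \<le> 2 ^ e * yt' ^ e\<close> M0])
      then show ?thesis using yt'0 by (simp add: field_simps)
    qed
    finally show ?thesis .
  qed
  then have "(S / yt' ^ e) * yt ^ e \<le> (M * 2 ^ e) * yt ^ e"
    using yw A it by (intro mult_right_mono) auto
  finally show ?thesis by (simp add: mult_ac)
qed


definition red :: "int \<Rightarrow> imat \<Rightarrow> imat" where
  "red N g = (case g of (a,b,c,d) \<Rightarrow> (a mod N, b mod N, c mod N, d mod N))"

lemma finite_red: "N > 0 \<Longrightarrow> finite (red N ` A)"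
proof -
  assume N: "N > 0"
  have m: "\<And>x. x mod N \<le> N" using N by (simp add: less_imp_le)
  have "red N ` A \<subseteq> {0..N} \<times> {0..N} \<times> {0..N} \<times> {0..N}"
    using N m by (auto simp: red_def split: prod.splits)
  then show ?thesis by (rule finite_subset) simp
qed

lemma principal_of_red:
  assumes "\<rho> \<in> SL2Z" "\<rho>' \<in> SL2Z" "red N \<rho> = red N \<rho>'"
  shows "mmul \<rho> (minv \<rho>') \<in> principal_cong N \<and> mmul (mmul \<rho> (minv \<rho>')) \<rho>' = \<rho>"
proof -
  obtain a b c d where r: "\<rho> = (a,b,c,d)" by (cases \<rho>) auto
  obtain a' b' c' d' where r': "\<rho>' = (a',b',c',d')" by (cases \<rho>') auto
  have "a mod N = a' mod N" "b mod N = b' mod N" "c mod N = c' mod N" "d mod N = d' mod N"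
    using assms(3) by (simp_all add: red_def r r')
  then show ?thesis using red_principal[of a b c d a' b' c' d' N] mmul_minv_cancel[of a' b' c' d' a b c d]
      assms(1,2) r r' by simp
qed

lemma neg_weight_zero:
  assumes "congruence_subgroup \<Gamma>" "k = - 2 * int e" "0 < e"
    "\<forall>z. Im z \<le> 0 \<longrightarrow> f z = 0"
    "\<forall>g\<in>\<Gamma>. \<forall>\<tau>. Im \<tau> > 0 \<longrightarrow>
          f (mob (of_intm g) \<tau>) = (case g of (a,b,c,d) \<Rightarrow> (of_int c * \<tau> + of_int d) powi k) * f \<tau>"
    "\<forall>\<sigma>\<in>SL2Z. holo_at_inf (slash k \<sigma> f)"
  shows "f = (\<lambda>_. 0)"
proof -
  obtain N where N: "N > 0" "principal_cong N \<subseteq> \<Gamma>" and GS: "\<Gamma> \<subseteq> SL2Z"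
    using assms(1) unfolding congruence_subgroup_def by blast
  define R where "R = red N ` SL2Z"
  have finR: "finite R" unfolding R_def by (rule finite_red[OF N(1)])
  define rep where "rep r = (SOME \<rho>. \<rho> \<in> SL2Z \<and> red N \<rho> = r)" for r
  have rep: "rep r \<in> SL2Z \<and> red N (rep r) = r" if "r \<in> R" for r
    unfolding rep_def by (rule someI_ex) (use that R_def in auto)
  define Bd where "Bd r = (SOME B. \<forall>\<tau>. 1/2 \<le> Im \<tau> \<longrightarrow> norm (slash k (rep r) f \<tau>) \<le> B)" for r
  have Bd: "\<forall>\<tau>. 1/2 \<le> Im \<tau> \<longrightarrow> norm (slash k (rep r) f \<tau>) \<le> Bd r" if "r \<in> R" for r
    unfolding Bd_def by (rule someI_ex) (rule holo_bound, use assms(6) rep[OF that] in blast)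
  define M where "M = (\<Sum>r\<in>R. \<bar>Bd r\<bar>)"
  have BM: "Bd r \<le> M" if "r \<in> R" for r
  proof -
    have "\<bar>Bd r\<bar> \<le> M" unfolding M_def by (rule member_le_sum[OF that _ finR]) simp
    then show ?thesis by simp
  qed
  have bound: "norm (f \<tau>) \<le> (2^e * M) * Im \<tau> ^ e" if t: "0 < Im \<tau>" for \<tau>
  proof -
    obtain \<sigma> where s: "\<sigma> \<in> SL2Z" "1/2 \<le> Im (mob (of_intm \<sigma>) \<tau>)" using reduction[OF t] by blast
    define \<tau>' where "\<tau>' = mob (of_intm \<sigma>) \<tau>"
    have t': "1/2 \<le> Im \<tau>'" "0 < Im \<tau>'" using s unfolding \<tau>'_def by auto
    define \<rho> where "\<rho> = minv \<sigma>"
    have \<rho>: "\<rho> \<in> SL2Z" unfolding \<rho>_def by (rule minv_SL2Z[OF s(1)])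
    have tt: "mob (of_intm \<rho>) \<tau>' = \<tau>" unfolding \<rho>_def \<tau>'_def by (rule mob_minv[OF s(1) t])
    define r where "r = red N \<rho>"
    have r: "r \<in> R" unfolding r_def R_def using \<rho> by blast
    define \<rho>r where "\<rho>r = rep r"
    have \<rho>r: "\<rho>r \<in> SL2Z" "red N \<rho>r = red N \<rho>" using rep[OF r] unfolding \<rho>r_def r_def by auto
    define \<gamma> where "\<gamma> = mmul \<rho> (minv \<rho>r)"
    have pg: "\<gamma> \<in> principal_cong N" "mmul \<gamma> \<rho>r = \<rho>"
      using principal_of_red[OF \<rho> \<rho>r(1) \<rho>r(2)[symmetric]] unfolding \<gamma>_def by auto
    have \<gamma>: "\<gamma> \<in> \<Gamma>" using pg(1) N(2) by blast
    have \<gamma>S: "\<gamma> \<in> SL2Z" using \<gamma> GS by blast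
    define w where "w = mob (of_intm \<rho>r) \<tau>'"
    have w: "0 < Im w" unfolding w_def by (rule Im_mob_pos[OF \<rho>r(1) t'(2)])
    have tw: "\<tau> = mob (of_intm \<gamma>) w"
      using mob_mmul[OF \<gamma>S \<rho>r(1) t'(2)] tt pg(2) unfolding w_def by simp
    have ftw: "f \<tau> = jf \<gamma> w powi k * f w"
      using assms(5) \<gamma> w tw by (simp add: jf_case)
    have itw: "Im \<tau> = Im w / (cmod (jf \<gamma> w))^2"
      using Im_mob[OF \<gamma>S w] tw by simp
    have sl: "slash k \<rho>r f \<tau>' = jf \<rho>r \<tau>' powi (- k) * f w"
      unfolding slash_jf w_def ..
    have iw: "Im w = Im \<tau>' / (cmod (jf \<rho>r \<tau>'))^2"
      unfolding w_def by (rule Im_mob[OF \<rho>r(1) t'(2)])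
    have SM: "norm (slash k \<rho>r f \<tau>') \<le> M"
      using Bd[OF r] t'(1) BM[OF r] unfolding \<rho>r_def by force
    have A: "cmod (jf \<gamma> w) > 0" using jf_nz[OF \<gamma>S w] by simp
    have Bj: "cmod (jf \<rho>r \<tau>') > 0" using jf_nz[OF \<rho>r(1) t'(2)] by simp
    have nf: "norm (f \<tau>) = norm (f w) / cmod (jf \<gamma> w) ^ (2*e)"
      unfolding ftw unfolding assms(2) powi_neg2e by (simp add: norm_mult norm_divide norm_power)
    have nsl: "norm (slash k \<rho>r f \<tau>') = cmod (jf \<rho>r \<tau>') ^ (2*e) * norm (f w)"
      unfolding sl unfolding assms(2) powi_pos2e by (simp add: norm_mult norm_power)
    show ?thesis
      by (rule key_bound[OF A Bj w t'(1) nf itw nsl iw SM norm_ge_zero])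
  qed
  have holf: "holo_at_inf f"
  proof (rule holo_at_inf_cong[OF assms(6)[rule_format, of "(1,0,0,1)"]])
    show "(1,0,0,1) \<in> SL2Z" by (simp add: SL2Z_det)
  next
    fix \<tau> :: complex assume "0 < Im \<tau>"
    show "slash k (1,0,0,1) f \<tau> = f \<tau>" by (simp add: slash_def mob_def of_intm_def)
  qed
  show ?thesis
  proof
    fix z
    show "f z = 0"
    proof (cases "0 < Im z")
      case True
      show ?thesis by (rule fourier_zero[OF holf assms(3) bound True])
    next
      case False then show ?thesis using assms(4) by simp
    qed
  qed
qed


definition Rlt :: "(nat \<times> nat) set" where "Rlt = {(a,b). a < b}"

lemma part_gt_lexord: "part_gt l l' \<longleftrightarrow> (plist l', plist l) \<in> lexord Rlt"
  unfolding part_gt_def Let_def lexord_take_index_conv Rlt_def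
  by (auto simp: min.commute)

lemma trans_Rlt: "trans Rlt" by (auto simp: trans_def Rlt_def)
lemma asym_Rlt: "asym Rlt" by (auto simp: asym_iff Rlt_def)

lemma part_gt_trans: "part_gt a b \<Longrightarrow> part_gt b c \<Longrightarrow> part_gt a c"
  unfolding part_gt_lexord using lexord_trans[OF _ _ trans_Rlt] by blast

lemma part_gt_asym: "part_gt a b \<Longrightarrow> \<not> part_gt b a"
  unfolding part_gt_lexord using lexord_asymmetric[OF asym_Rlt] by blast

lemma part_gt_irrefl: "\<not> part_gt a a"
  using part_gt_asym by blast

lemma pair_gt_lval: "pair_gt k k' \<Longrightarrow> lval k' \<le> lval k"
  unfolding pair_gt_def lval_def by auto

lemma pair_gt_trans: "pair_gt a b \<Longrightarrow> pair_gt b c \<Longrightarrow> pair_gt a c"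
  unfolding pair_gt_def using part_gt_trans pair_gt_lval[unfolded pair_gt_def]
  by (smt (verit) lval_def)

lemma pair_gt_asym: "pair_gt a b \<Longrightarrow> \<not> pair_gt b a"
  unfolding pair_gt_def using part_gt_asym part_gt_irrefl
  by (smt (verit) lval_def)

theorem lemma2p4:
  fixes \<Gamma> :: "imat set" and l0 m0 l1 m1 :: "nat multiset"
  assumes "congruence_subgroup \<Gamma>"
    and "is_partition l0" "is_partition m0" "is_partition l1" "is_partition m1"
    and "pair_gt (l0, m0) (l1, m1)" "wt (l1, m1) = wt (l0, m0)"
    and "\<forall>l m. is_partition l \<and> is_partition m \<and> pair_gt (l0, m0) (l, m) \<and> wt (l, m) = wt (l0, m0)
               \<longrightarrow> pair_le (l, m) (l1, m1)"
  shows "(\<forall>v\<in>Vinv0 \<Gamma> (l0, m0). v (l0, m0) \<in> MF (2 * (int (size m0) - int (size l0))) \<Gamma>) \<and>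
         {v \<in> Vinv0 \<Gamma> (l0, m0). v (l0, m0) = (\<lambda>_. 0)} = Vinv0 \<Gamma> (l1, m1)"
proof (intro conjI ballI)
  fix v assume v: "v \<in> Vinv0 \<Gamma> (l0, m0)"
  define K where "K = 2 * (int (size m0) - int (size l0))"
  define f where "f = v (l0, m0)"
  have vD: "v \<in> Dch" using v by (simp add: Vinv0_def Vfilt_def)
  have inv: "\<forall>g\<in>\<Gamma>. piact (of_intm g) v = v" and cusp: "\<forall>\<rho>\<in>SL2Z. \<forall>k. holo_at_inf (piact (of_intm \<rho>) v k)"
    using v by (auto simp: Vinv0_def)
  have lv: "\<forall>k\<in>supp v. lval k \<le> lval (l0, m0)"
  proof
    fix k assume "k \<in> supp v"
    then have "pair_le k (l0, m0)" using v by (auto simp: Vinv0_def Vfilt_def)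
    then show "lval k \<le> lval (l0, m0)" unfolding pair_le_def using pair_gt_lval[of "(l0, m0)" k] by auto
  qed
  have sl: "piact (of_intm g) v (l0, m0) z = slash K g f z" if "g \<in> SL2Z" "0 < Im z" for g z
    using piact_slash[OF that(1) vD lv that(2)] unfolding K_def f_def by simp
  have GS: "\<Gamma> \<subseteq> SL2Z" using assms(1) by (simp add: congruence_subgroup_def)
  have hol: "f holomorphic_on upper" and off: "\<forall>z. Im z \<le> 0 \<longrightarrow> f z = 0"
    using vD unfolding f_def Dch_def by auto
  have tr: "\<forall>g\<in>\<Gamma>. \<forall>\<tau>. Im \<tau> > 0 \<longrightarrow>
          f (mob (of_intm g) \<tau>) = (case g of (a,b,c,d) \<Rightarrow> (of_int c * \<tau> + of_int d) powi K) * f \<tau>"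
  proof (intro ballI allI impI)
    fix g \<tau> assume g: "g \<in> \<Gamma>" and t: "Im \<tau> > 0"
    obtain a b c d where gg: "g = (a,b,c,d)" by (cases g) auto
    have gS: "g \<in> SL2Z" using g GS by auto
    have det: "real_of_int a * real_of_int d - real_of_int b * real_of_int c = 1"
      using gS gg unfolding SL2Z_def by (simp flip: of_int_mult of_int_diff)
    have w: "of_int c * \<tau> + of_int d \<noteq> (0::complex)"
      using mob_denom_nz[OF det t] by simp
    have "f \<tau> = piact (of_intm g) v (l0, m0) \<tau>" using inv g unfolding f_def by simp
    also have "\<dots> = (of_int c * \<tau> + of_int d) powi (- K) * f (mob (of_intm g) \<tau>)"
      using sl[OF gS t] by (simp add: slash_def gg)
    finally have "(of_int c * \<tau> + of_int d) powi K * f \<tau> = f (mob (of_intm g) \<tau>)"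
      using w by (simp add: power_int_minus field_simps)
    then show "f (mob (of_intm g) \<tau>) = (case g of (a,b,c,d) \<Rightarrow> (of_int c * \<tau> + of_int d) powi K) * f \<tau>"
      by (simp add: gg)
  qed
  have hinf: "\<forall>\<sigma>\<in>SL2Z. holo_at_inf (slash K \<sigma> f)"
  proof
    fix \<sigma> assume s: "\<sigma> \<in> SL2Z"
    show "holo_at_inf (slash K \<sigma> f)"
      by (rule holo_at_inf_cong[OF cusp[rule_format, OF s, of "(l0, m0)"]]) (use sl[OF s] in simp)
  qed
  have neg: "K < 0 \<longrightarrow> f = (\<lambda>_. 0)"
  proof
    assume K0: "K < 0"
    define e where "e = nat (int (size l0) - int (size m0))"
    have Ke: "K = - 2 * int e" and e0: "0 < e" using K0 unfolding K_def e_def by auto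
    show "f = (\<lambda>_. 0)" by (rule neg_weight_zero[OF assms(1) Ke e0 off tr hinf])
  qed
  show "v (l0, m0) \<in> MF (2 * (int (size m0) - int (size l0))) \<Gamma>"
    unfolding MF_def K_def[symmetric] f_def[symmetric] using neg hol off tr hinf by blast
next
  show "{v \<in> Vinv0 \<Gamma> (l0, m0). v (l0, m0) = (\<lambda>_. 0)} = Vinv0 \<Gamma> (l1, m1)"
  proof (intro equalityI subsetI)
    fix v assume "v \<in> {v \<in> Vinv0 \<Gamma> (l0, m0). v (l0, m0) = (\<lambda>_. 0)}"
    then have v: "v \<in> Vinv0 \<Gamma> (l0, m0)" and z: "v (l0, m0) = (\<lambda>_. 0)" by auto
    have "\<forall>k\<in>supp v. pair_le k (l1, m1) \<and> wt k = wt (l1, m1)"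
    proof
      fix k assume k: "k \<in> supp v"
      obtain l m where lm: "k = (l, m)" by (cases k)
      have "pair_le k (l0, m0)" "wt k = wt (l0, m0)" using v k by (auto simp: Vinv0_def Vfilt_def)
      moreover have "k \<noteq> (l0, m0)" using k z by (auto simp: supp_def)
      ultimately have "pair_gt (l0, m0) k" by (simp add: pair_le_def)
      moreover have "is_partition l" "is_partition m" using v k lm by (auto simp: Vinv0_def Vfilt_def Dch_def is_partition_def)
      ultimately show "pair_le k (l1, m1) \<and> wt k = wt (l1, m1)"
        using assms(7,8) \<open>wt k = wt (l0, m0)\<close> lm by auto
    qed
    then show "v \<in> Vinv0 \<Gamma> (l1, m1)" using v by (auto simp: Vinv0_def Vfilt_def)
  next
    fix v assume v: "v \<in> Vinv0 \<Gamma> (l1, m1)"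
    have sk: "\<forall>k\<in>supp v. pair_le k (l0, m0) \<and> wt k = wt (l0, m0)"
    proof
      fix k assume k: "k \<in> supp v"
      have "pair_le k (l1, m1)" "wt k = wt (l1, m1)" using v k by (auto simp: Vinv0_def Vfilt_def)
      then show "pair_le k (l0, m0) \<and> wt k = wt (l0, m0)"
        using assms(6,7) pair_gt_trans unfolding pair_le_def by metis
    qed
    have "(l0, m0) \<notin> supp v"
    proof
      assume "(l0, m0) \<in> supp v"
      then have "pair_le (l0, m0) (l1, m1)" using v by (auto simp: Vinv0_def Vfilt_def)
      then show False using assms(6) pair_gt_asym unfolding pair_le_def by blast
    qed
    then have "v (l0, m0) = (\<lambda>_. 0)" by (simp add: supp_def)
    then show "v \<in> {v \<in> Vinv0 \<Gamma> (l0, m0). v (l0, m0) = (\<lambda>_. 0)}"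
      using v sk by (auto simp: Vinv0_def Vfilt_def)
  qed
qed

end
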